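(* Let $a\ge0$. For all $U\in\mathcal H^2(\mathbb C_a)$, the mapping $t\mapsto\big(p\mapsto e^{-p\widetilde{\mathcal K}(p)t}U(p)\big)$ from $\mathbb R^+$ to $\mathcal H^2(\mathbb C_a)$ is well defined and continuous, and for all $t\in\mathbb R^+$, $\|e^{-p\widetilde{\mathcal K}(p)t}U\|_{\mathcal H^2(\mathbb C_a)}\le\|U\|_{\mathcal H^2(\mathbb C_a)}$. If moreover $a>0$, there exists $c_a>0$ such that for all $t\in\mathbb R^+$, \[ \|e^{-p\widetilde{\mathcal K}(p)t}U\|_{\mathcal H^2(\mathbb C_a)}\le e^{-c_at}\|U\|_{\mathcal H^2(\mathbb C_a)}. \]
   Context: $\kappa>0$; $\widetilde{\mathcal K}(p)=(1+\kappa^2p^2)^{-1/2}$, where the square root is the one with positive real part. $\mathbb C_a=\{p\in\mathbb C:\mathfrak{Re}\,p>a\}$ and $\mathcal H^2(\mathbb C_a)$ is the Hardy space of holomorphic $U$ on $\mathbb C_a$ with $\|U\|^2_{\mathcal H^2(\mathbb C_a)}=\sup_{\alpha>a}\int_{\mathbb R}|U(\alpha+i\xi)|^2d\xi<\infty$. *)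

theory Defs
  imports "HOL-Analysis.Analysis"
begin

definition half_plane :: "real \<Rightarrow> complex set" where
  "half_plane a = {p. a < Re p}"

definition Ktilde :: "real \<Rightarrow> complex \<Rightarrow> complex" where
  "Ktilde \<kappa> p = 1 / csqrt (1 + (complex_of_real \<kappa>)\<^sup>2 * p\<^sup>2)"

definition hardy_sq :: "real \<Rightarrow> (complex \<Rightarrow> complex) \<Rightarrow> ennreal" where
  "hardy_sq a U = (SUP \<alpha>\<in>{a<..}. \<integral>\<^sup>+ \<xi>. ennreal ((cmod (U (Complex \<alpha> \<xi>)))\<^sup>2) \<partial>lborel)"

definition H2 :: "real \<Rightarrow> (complex \<Rightarrow> complex) set" where
  "H2 a = {U. U holomorphic_on half_plane a \<and> hardy_sq a U < \<infinity>}"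

definition H2_norm :: "real \<Rightarrow> (complex \<Rightarrow> complex) \<Rightarrow> real" where
  "H2_norm a U = sqrt (enn2real (hardy_sq a U))"

definition semigrp :: "real \<Rightarrow> real \<Rightarrow> (complex \<Rightarrow> complex) \<Rightarrow> complex \<Rightarrow> complex" where
  "semigrp \<kappa> t U = (\<lambda>p. exp (- p * Ktilde \<kappa> p * complex_of_real t) * U p)"

end

theory Submission
  imports Defs "HOL-Complex_Analysis.Complex_Analysis" "HOL-Real_Asymp.Real_Asymp"
begin


definition wfun :: "real \<Rightarrow> complex \<Rightarrow> complex" where
  "wfun \<kappa> p = p * Ktilde \<kappa> p"

lemma zarg_notin:
  assumes "\<kappa> > 0" "Re p > 0"
  shows "1 + (complex_of_real \<kappa>)\<^sup>2 * p\<^sup>2 \<notin> \<real>\<^sub>\<le>\<^sub>0"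
proof
  assume "1 + (complex_of_real \<kappa>)\<^sup>2 * p\<^sup>2 \<in> \<real>\<^sub>\<le>\<^sub>0"
  then have im: "Im (1 + (complex_of_real \<kappa>)\<^sup>2 * p\<^sup>2) = 0" and re: "Re (1 + (complex_of_real \<kappa>)\<^sup>2 * p\<^sup>2) \<le> 0"
    by (auto simp: complex_nonpos_Reals_iff)
  from im have "2 * \<kappa>\<^sup>2 * Re p * Im p = 0" by (simp add: power2_eq_square algebra_simps)
  with assms have "Im p = 0" by simp
  with re assms show False by (simp add: power2_eq_square) (smt (verit) mult_nonneg_nonneg zero_le_square)
qed

lemma Re_csqrt_pos:
  assumes "z \<notin> \<real>\<^sub>\<le>\<^sub>0" shows "Re (csqrt z) > 0"
proof -
  have "Re (csqrt z) \<noteq> 0"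
  proof
    assume h: "Re (csqrt z) = 0"
    obtain s where s: "s = csqrt z" by blast
    have "z = s\<^sup>2" by (simp add: s)
    also have "\<dots> = - (Im s)\<^sup>2" using h s by (simp add: power2_eq_square complex_eq_iff)
    finally have "z \<in> \<real>\<^sub>\<le>\<^sub>0" by (simp add: complex_nonpos_Reals_iff)
    with assms show False by simp
  qed
  with Re_csqrt[of z] show ?thesis by simp
qed

lemma Re_wfun_pos:
  assumes "\<kappa> > 0" "Re p > 0"
  shows "Re (wfun \<kappa> p) > 0"
proof -
  define z where "z = 1 + (complex_of_real \<kappa>)\<^sup>2 * p\<^sup>2"
  define s where "s = csqrt z"
  have rs: "Re s > 0" unfolding s_def z_def by (rule Re_csqrt_pos[OF zarg_notin[OF assms]])
  have "s\<^sup>2 = z" by (simp add: s_def)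
  then have "Im (s\<^sup>2) = Im z" by simp
  then have "2 * Re s * Im s = 2 * \<kappa>\<^sup>2 * Re p * Im p" by (simp add: z_def power2_eq_square algebra_simps)
  then have ims: "Im s = \<kappa>\<^sup>2 * Re p * Im p / Re s" using rs by (simp add: field_simps)
  have "Im p * Im s \<ge> 0" unfolding ims using rs assms
    by (simp add: mult_nonneg_nonneg power2_eq_square) (metis divide_nonneg_pos mult.assoc mult.commute mult_nonneg_nonneg zero_le_square assms(2) less_imp_le mult_pos_pos assms(1))
  have sn: "s \<noteq> 0" using rs by auto
  have "wfun \<kappa> p = p / s" by (simp add: wfun_def Ktilde_def s_def z_def)
  then have "Re (wfun \<kappa> p) = (Re p * Re s + Im p * Im s) / (cmod s)\<^sup>2"
    by (simp add: Re_divide cmod_power2)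
  moreover have "Re p * Re s + Im p * Im s > 0" using rs assms \<open>Im p * Im s \<ge> 0\<close>
    by (smt (verit) mult_pos_pos)
  moreover have "(cmod s)\<^sup>2 > 0" using sn by simp
  ultimately show ?thesis by simp
qed



lemma real_core:
  fixes a \<kappa> X Y nv :: real
  assumes a: "a > 0" and k: "\<kappa> > 0"
    and hX: "X > a * (X\<^sup>2 + Y\<^sup>2)" and hB: "X\<^sup>2 + Y\<^sup>2 < 1 / a\<^sup>2"
    and nv: "nv\<^sup>2 = (\<kappa>\<^sup>2 + X\<^sup>2 - Y\<^sup>2)\<^sup>2 + (2*X*Y)\<^sup>2" "nv \<ge> 0"
    and nvB: "nv \<le> \<kappa>\<^sup>2 + 1 / a\<^sup>2"
  shows "nv + (\<kappa>\<^sup>2 + X\<^sup>2 - Y\<^sup>2) \<ge> min (\<kappa>\<^sup>2) (a\<^sup>2 * \<kappa>^6 / (4 * (\<kappa>\<^sup>2 + 1 / a\<^sup>2)))"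
proof -
  define R where "R = \<kappa>\<^sup>2 + X\<^sup>2 - Y\<^sup>2"
  define B where "B = \<kappa>\<^sup>2 + 1 / a\<^sup>2"
  have Bpos: "B > 0" using k a by (simp add: B_def add_pos_nonneg)
  have "\<bar>R\<bar>\<^sup>2 \<le> nv\<^sup>2" using nv(1) unfolding R_def by simp
  then have "\<bar>R\<bar> \<le> nv" using nv(2) by (rule power2_le_imp_le)
  then have nvR: "nv \<ge> R" "nv \<ge> -R" by linarith+
  show ?thesis
  proof (cases "R \<ge> \<kappa>\<^sup>2 / 2")
    case True
    then have "nv + R \<ge> \<kappa>\<^sup>2" using nvR by linarith
    then show ?thesis unfolding R_def by linarith
  next
    case False
    then have y2: "Y\<^sup>2 > \<kappa>\<^sup>2/2 + X\<^sup>2" unfolding R_def by linarith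
    then have y2': "Y\<^sup>2 > \<kappa>\<^sup>2/2" by (smt (verit) zero_le_power2)
    have "X > a * Y\<^sup>2" using hX a by (smt (verit) mult_left_mono zero_le_power2)
    then have xg: "X > a * \<kappa>\<^sup>2 / 2" using y2' a by (smt (verit) mult_strict_left_mono times_divide_eq_right)
    have xpos: "X > 0" using xg a k by (smt (verit) divide_pos_pos mult_pos_pos zero_less_power)
    have "(2*X*Y)\<^sup>2 = 4 * X\<^sup>2 * Y\<^sup>2" by (simp add: power_mult_distrib)
    also have "\<dots> \<ge> 4 * (a * \<kappa>\<^sup>2 / 2)\<^sup>2 * (\<kappa>\<^sup>2/2)"
      using xg y2' a k xpos
      by (intro mult_mono mult_left_mono power_mono) (auto simp: less_imp_le)
    also have "4 * (a * \<kappa>\<^sup>2 / 2)\<^sup>2 * (\<kappa>\<^sup>2/2) = a\<^sup>2 * \<kappa>^6 / 2" by (simp add: power_mult_distrib power2_eq_square eval_nat_numeral)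
    finally have I2: "(2*X*Y)\<^sup>2 \<ge> a\<^sup>2 * \<kappa>^6 / 2" .
    have prod: "(nv + R) * (nv - R) = (2*X*Y)\<^sup>2" using nv(1) unfolding R_def by (simp add: algebra_simps power2_eq_square)
    have "nv - R \<le> 2 * B" using nvR nvB B_def by argo
    have "nv - R > 0"
    proof -
      have "(2*X*Y)\<^sup>2 > 0" using I2 a k by (smt (verit) divide_pos_pos mult_pos_pos zero_less_power)
      then have "(nv + R) * (nv - R) > 0" using prod by simp
      then show ?thesis using nvR by (smt (verit) mult_nonneg_nonpos)
    qed
    have "nv + R = (2*X*Y)\<^sup>2 / (nv - R)" using prod \<open>nv - R > 0\<close> by (simp add: field_simps)
    also have "\<dots> \<ge> (a\<^sup>2 * \<kappa>^6 / 2) / (2 * B)"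
      using I2 \<open>nv - R > 0\<close> \<open>nv - R \<le> 2 * B\<close> Bpos
      by (intro frac_le) auto
    finally have "nv + R \<ge> a\<^sup>2 * \<kappa>^6 / (4 * B)" by simp
    then show ?thesis unfolding R_def B_def by linarith
  qed
qed



lemma wfun_sq:
  assumes "\<kappa> > 0" "Re p > 0"
  shows "(wfun \<kappa> p)\<^sup>2 = 1 / ((complex_of_real \<kappa>)\<^sup>2 + 1 / p\<^sup>2)"
proof -
  have z: "1 + (complex_of_real \<kappa>)\<^sup>2 * p\<^sup>2 \<noteq> 0" using zarg_notin[OF assms] by auto
  have p: "p \<noteq> 0" using assms by auto
  have "(wfun \<kappa> p)\<^sup>2 = p\<^sup>2 / (1 + (complex_of_real \<kappa>)\<^sup>2 * p\<^sup>2)"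
    by (simp add: wfun_def Ktilde_def power_divide)
  also have "\<dots> = 1 / ((complex_of_real \<kappa>)\<^sup>2 + 1 / p\<^sup>2)" using z p by (simp add: field_simps)
  finally show ?thesis .
qed

lemma Re_sq_formula: "(Re w)\<^sup>2 = ((cmod w)\<^sup>2 + Re (w\<^sup>2)) / 2"
proof -
  have "Re (w\<^sup>2) = (Re w)\<^sup>2 - (Im w)\<^sup>2" by (simp add: power2_eq_square)
  then show ?thesis by (simp add: cmod_power2)
qed

lemma Re_wfun_lower:
  assumes k: "\<kappa> > 0" and a: "a > 0"
  shows "\<exists>c>0. \<forall>p. Re p > a \<longrightarrow> Re (wfun \<kappa> p) \<ge> c"
proof -
  define B where "B = \<kappa>\<^sup>2 + 1 / a\<^sup>2"
  define m where "m = min (\<kappa>\<^sup>2) (a\<^sup>2 * \<kappa>^6 / (4 * B))"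
  have Bpos: "B > 0" using k a by (simp add: B_def add_pos_nonneg)
  have mpos: "m > 0" using k a Bpos by (simp add: m_def)
  define c where "c = sqrt (m / (2 * B\<^sup>2))"
  have cpos: "c > 0" using mpos Bpos by (simp add: c_def)
  have "Re (wfun \<kappa> p) \<ge> c" if hp: "Re p > a" for p
  proof -
    have p0: "Re p > 0" using a hp by simp
    have pn: "p \<noteq> 0" using p0 by auto
    define u where "u = 1 / p"
    define v where "v = (complex_of_real \<kappa>)\<^sup>2 + u\<^sup>2"
    define X where "X = Re u"
    define Y where "Y = Im u"
    have np: "(cmod p)\<^sup>2 > 0" using pn by simp
    have XY: "X\<^sup>2 + Y\<^sup>2 = 1 / (cmod p)\<^sup>2" unfolding X_def Y_def u_def
      by (simp add: cmod_power2[symmetric] norm_divide power_divide)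
    have Xe: "X = Re p / (cmod p)\<^sup>2" unfolding X_def u_def by (simp add: Re_divide cmod_power2)
    have rp: "(cmod p)\<^sup>2 > a\<^sup>2" using hp a
      by (smt (verit) abs_Re_le_cmod power_strict_mono zero_less_numeral)
    have hX: "X > a * (X\<^sup>2 + Y\<^sup>2)"
    proof -
      have "a * (X\<^sup>2 + Y\<^sup>2) = a / (cmod p)\<^sup>2" by (simp add: XY)
      also have "\<dots> < Re p / (cmod p)\<^sup>2" using hp np by (simp add: divide_strict_right_mono)
      finally show ?thesis by (simp add: Xe)
    qed
    have hB: "X\<^sup>2 + Y\<^sup>2 < 1 / a\<^sup>2" unfolding XY using rp a by (simp add: frac_less2)
    have Rv: "Re v = \<kappa>\<^sup>2 + X\<^sup>2 - Y\<^sup>2" and Iv: "Im v = 2*X*Y"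
      unfolding v_def X_def Y_def by (simp_all add: power2_eq_square)
    have nv: "(cmod v)\<^sup>2 = (\<kappa>\<^sup>2 + X\<^sup>2 - Y\<^sup>2)\<^sup>2 + (2*X*Y)\<^sup>2" using Rv Iv by (simp add: cmod_power2)
    have "cmod v \<le> cmod ((complex_of_real \<kappa>)\<^sup>2) + cmod (u\<^sup>2)" unfolding v_def by (rule norm_triangle_ineq)
    also have "\<dots> = \<kappa>\<^sup>2 + (X\<^sup>2 + Y\<^sup>2)" unfolding XY u_def by (simp add: norm_power norm_divide power_divide)
    finally have nvB: "cmod v \<le> B" using hB unfolding B_def by linarith
    have core: "cmod v + Re v \<ge> m" unfolding Rv m_def B_def
      by (rule real_core[OF a k hX hB nv norm_ge_zero]) (use nvB in \<open>simp add: B_def\<close>)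
    have v0: "v \<noteq> 0" using core mpos by auto
    have w2: "(wfun \<kappa> p)\<^sup>2 = 1 / v" using wfun_sq[OF k p0] by (simp add: v_def u_def power_divide)
    have "(Re (wfun \<kappa> p))\<^sup>2 = ((cmod (wfun \<kappa> p))\<^sup>2 + Re ((wfun \<kappa> p)\<^sup>2)) / 2" by (rule Re_sq_formula)
    also have "(cmod (wfun \<kappa> p))\<^sup>2 = 1 / cmod v"
      by (metis w2 norm_divide norm_one norm_power)
    also have "Re ((wfun \<kappa> p)\<^sup>2) = Re v / (cmod v)\<^sup>2" unfolding w2 by (simp add: Re_divide cmod_power2)
    also have "(1 / cmod v + Re v / (cmod v)\<^sup>2) / 2 = (cmod v + Re v) / (2 * (cmod v)\<^sup>2)"
      using v0 by (simp add: field_simps power2_eq_square)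
    also have "\<dots> \<ge> m / (2 * B\<^sup>2)"
      using core mpos nvB v0 by (intro frac_le) (auto intro!: power_mono)
    finally have "(Re (wfun \<kappa> p))\<^sup>2 \<ge> c\<^sup>2" using mpos Bpos by (simp add: c_def)
    then show ?thesis using Re_wfun_pos[OF k p0] cpos by (meson power2_le_imp_le less_imp_le)
  qed
  then show ?thesis using cpos by blast
qed



lemma exp_diff_bound:
  fixes w :: complex and s t :: real
  assumes "Re w \<ge> 0" "s \<ge> 0" "t \<ge> 0"
  shows "cmod (exp (- w * of_real t) - exp (- w * of_real s)) \<le> cmod w * \<bar>t - s\<bar>"
proof -
  let ?S = "closed_segment (complex_of_real t) (complex_of_real s)"
  have "cmod ((\<lambda>z. exp (- w * z)) (of_real t) - (\<lambda>z. exp (- w * z)) (of_real s)) \<le> cmod w * cmod (complex_of_real t - of_real s)"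
  proof (rule field_differentiable_bound[where f' = "\<lambda>z. - w * exp (- w * z)"])
    show "convex ?S" by simp
    show "((\<lambda>z. exp (- w * z)) has_field_derivative - w * exp (- w * z)) (at z within ?S)" for z
      by (auto intro!: derivative_eq_intros)
    show "cmod (- w * exp (- w * z)) \<le> cmod w" if "z \<in> ?S" for z
    proof -
      from that obtain u where u: "0 \<le> u" "u \<le> 1" "z = (1 - u) *\<^sub>R of_real t + u *\<^sub>R of_real s"
        by (auto simp: in_segment)
      have "Im z = 0" "Re z \<ge> 0" using u assms by auto
      then have "Re (- w * z) \<le> 0" using assms by (simp add: mult_nonneg_nonneg)
      then have "cmod (exp (- w * z)) \<le> 1" by simp
      then show ?thesis by (simp add: norm_mult mult_left_le)
    qed
  qed auto
  then show ?thesis by (simp flip: of_real_diff)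
qed

lemma exp_diff_bound2:
  fixes w :: complex and s t :: real
  assumes "Re w \<ge> 0" "s \<ge> 0" "t \<ge> 0"
  shows "cmod (exp (- w * of_real t) - exp (- w * of_real s)) \<le> 2"
proof -
  have "cmod (exp (- w * of_real t)) \<le> 1" "cmod (exp (- w * of_real s)) \<le> 1"
    using assms by (simp_all add: mult_nonneg_nonneg)
  then show ?thesis by (smt (verit) norm_triangle_ineq4)
qed

definition Gsq :: "real \<Rightarrow> real \<Rightarrow> real" where
  "Gsq \<kappa> \<xi> = (1 + 1 / (\<kappa> * \<bar>\<xi> - 1/\<kappa>\<bar>)) * (1 + 1 / (\<kappa> * \<bar>\<xi> + 1/\<kappa>\<bar>)) / \<kappa>\<^sup>2"

lemma wfun_Gsq:
  assumes k: "\<kappa> > 0" and p: "Re p > 0" and n1: "Im p \<noteq> 1/\<kappa>" and n2: "Im p \<noteq> -1/\<kappa>"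
  shows "(cmod (wfun \<kappa> p))\<^sup>2 \<le> Gsq \<kappa> (Im p)"
proof -
  define A where "A = cmod (p - \<i> / of_real \<kappa>)"
  define C where "C = cmod (p + \<i> / of_real \<kappa>)"
  have A1: "A \<ge> \<bar>Im p - 1/\<kappa>\<bar>" unfolding A_def using abs_Im_le_cmod[of "p - \<i> / of_real \<kappa>"] by simp
  have C1: "C \<ge> \<bar>Im p + 1/\<kappa>\<bar>" unfolding C_def using abs_Im_le_cmod[of "p + \<i> / of_real \<kappa>"] by simp
  have A0: "\<bar>Im p - 1/\<kappa>\<bar> > 0" using n1 by simp
  have "-1/\<kappa> = -(1/\<kappa>)" by simp
  then have C0: "\<bar>Im p + 1/\<kappa>\<bar> > 0" using n2 by linarith
  have Ap: "A > 0" using A1 A0 by linarith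
  have Cp: "C > 0" using C1 C0 by linarith
  have pA: "cmod p \<le> A + 1/\<kappa>" unfolding A_def using norm_triangle_ineq[of "p - \<i> / of_real \<kappa>" "\<i> / of_real \<kappa>"] k
    by (simp add: norm_divide)
  have pC: "cmod p \<le> C + 1/\<kappa>" unfolding C_def using norm_triangle_ineq[of "p + \<i> / of_real \<kappa>" "- \<i> / of_real \<kappa>"] k
    by (simp add: norm_divide)
  have kc: "complex_of_real \<kappa> \<noteq> 0" using k by simp
  have "(p - \<i> / of_real \<kappa>) * (p + \<i> / of_real \<kappa>) = p\<^sup>2 - (\<i> / of_real \<kappa>)\<^sup>2"
    by (simp add: power2_eq_square algebra_simps)
  also have "(\<i> / of_real \<kappa>)\<^sup>2 = - 1 / (complex_of_real \<kappa>)\<^sup>2" by (simp add: power_divide)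
  finally have "(complex_of_real \<kappa>)\<^sup>2 * ((p - \<i> / of_real \<kappa>) * (p + \<i> / of_real \<kappa>)) = (complex_of_real \<kappa>)\<^sup>2 * p\<^sup>2 + (complex_of_real \<kappa>)\<^sup>2 * (1 / (complex_of_real \<kappa>)\<^sup>2)"
    by (simp add: algebra_simps)
  also have "(complex_of_real \<kappa>)\<^sup>2 * (1 / (complex_of_real \<kappa>)\<^sup>2) = 1" using kc by simp
  finally have zfac: "1 + (complex_of_real \<kappa>)\<^sup>2 * p\<^sup>2 = (complex_of_real \<kappa>)\<^sup>2 * ((p - \<i> / of_real \<kappa>) * (p + \<i> / of_real \<kappa>))"
    by simp
  have nz: "cmod (1 + (complex_of_real \<kappa>)\<^sup>2 * p\<^sup>2) = \<kappa>\<^sup>2 * (A * C)"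
    unfolding zfac A_def C_def by (simp add: norm_mult norm_power)
  have "(cmod (wfun \<kappa> p))\<^sup>2 = (cmod p)\<^sup>2 / cmod (1 + (complex_of_real \<kappa>)\<^sup>2 * p\<^sup>2)"
    by (simp add: wfun_def Ktilde_def norm_divide power_divide)
  also have "\<dots> = (cmod p)\<^sup>2 / (\<kappa>\<^sup>2 * (A * C))" by (simp add: nz)
  also have "\<dots> \<le> ((A + 1/\<kappa>) * (C + 1/\<kappa>)) / (\<kappa>\<^sup>2 * (A * C))"
  proof (rule divide_right_mono)
    show "(cmod p)\<^sup>2 \<le> (A + 1/\<kappa>) * (C + 1/\<kappa>)" unfolding power2_eq_square
      using pA pC Ap Cp k by (intro mult_mono) auto
  qed (use k Ap Cp in simp)
  also have "\<dots> = (1 + 1/(\<kappa>*A)) * (1 + 1/(\<kappa>*C)) / \<kappa>\<^sup>2"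
  proof -
    have e1: "A + 1/\<kappa> = A * (1 + 1/(\<kappa>*A))" using k Ap by (simp add: distrib_left)
    have e2: "C + 1/\<kappa> = C * (1 + 1/(\<kappa>*C))" using k Cp by (simp add: distrib_left)
    show ?thesis unfolding e1 e2 using Ap Cp by simp
  qed
  also have "\<dots> \<le> Gsq \<kappa> (Im p)" unfolding Gsq_def
  proof (rule divide_right_mono)
    have "1/(\<kappa>*A) \<le> 1/(\<kappa>*\<bar>Im p - 1/\<kappa>\<bar>)" using A1 A0 k by (intro divide_left_mono mult_left_mono mult_pos_pos) auto
    moreover have "1/(\<kappa>*C) \<le> 1/(\<kappa>*\<bar>Im p + 1/\<kappa>\<bar>)" using C1 C0 k by (intro divide_left_mono mult_left_mono mult_pos_pos) auto
    ultimately show "(1 + 1/(\<kappa>*A)) * (1 + 1/(\<kappa>*C)) \<le> (1 + 1 / (\<kappa> * \<bar>Im p - 1/\<kappa>\<bar>)) * (1 + 1 / (\<kappa> * \<bar>Im p + 1/\<kappa>\<bar>))"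
      using k Ap Cp by (intro mult_mono add_left_mono) auto
  qed simp
  finally show ?thesis .
qed



lemma open_half_plane: "open (half_plane a)"
  unfolding half_plane_def by (simp add: open_halfspace_Re_gt)

lemma cont_line:
  assumes "continuous_on (half_plane a) U" "\<alpha> > a"
  shows "continuous_on UNIV (\<lambda>\<xi>. U (Complex \<alpha> \<xi>))"
proof -
  have "continuous_on UNIV (\<lambda>\<xi>::real. Complex \<alpha> \<xi>)"
    by (simp add: Complex_eq continuous_intros)
  moreover have "(\<lambda>\<xi>. Complex \<alpha> \<xi>) ` UNIV \<subseteq> half_plane a" using assms by (auto simp: half_plane_def)
  ultimately show ?thesis using continuous_on_compose2[OF assms(1)] by blast
qed

lemma meas_line:
  assumes "continuous_on (half_plane a) U" "\<alpha> > a"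
  shows "(\<lambda>\<xi>. U (Complex \<alpha> \<xi>)) \<in> borel_measurable lborel"
  using cont_line[OF assms] by (simp add: borel_measurable_continuous_onI)

lemma H2_cont: "U \<in> H2 a \<Longrightarrow> continuous_on (half_plane a) U"
  unfolding H2_def by (auto intro: holomorphic_on_imp_continuous_on)

lemma line_le_hardy:
  "\<alpha> > a \<Longrightarrow> (\<integral>\<^sup>+ \<xi>. ennreal ((cmod (U (Complex \<alpha> \<xi>)))\<^sup>2) \<partial>lborel) \<le> hardy_sq a U"
  unfolding hardy_sq_def by (rule SUP_upper) auto

lemma mult_hardy:
  assumes U: "continuous_on (half_plane a) U"
    and mb: "\<And>p. p \<in> half_plane a \<Longrightarrow> cmod (m p) \<le> b" and b: "b \<ge> 0"
  shows "hardy_sq a (\<lambda>p. m p * U p) \<le> ennreal (b\<^sup>2) * hardy_sq a U"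
  unfolding hardy_sq_def
proof (rule SUP_least)
  fix \<alpha> assume "\<alpha> \<in> {a<..}"
  then have \<alpha>: "\<alpha> > a" by simp
  have "(\<integral>\<^sup>+ \<xi>. ennreal ((cmod (m (Complex \<alpha> \<xi>) * U (Complex \<alpha> \<xi>)))\<^sup>2) \<partial>lborel)
      \<le> (\<integral>\<^sup>+ \<xi>. ennreal (b\<^sup>2) * ennreal ((cmod (U (Complex \<alpha> \<xi>)))\<^sup>2) \<partial>lborel)"
  proof (rule nn_integral_mono)
    fix \<xi>
    have "cmod (m (Complex \<alpha> \<xi>)) \<le> b" using mb \<alpha> by (simp add: half_plane_def)
    then have "(cmod (m (Complex \<alpha> \<xi>) * U (Complex \<alpha> \<xi>)))\<^sup>2 \<le> b\<^sup>2 * (cmod (U (Complex \<alpha> \<xi>)))\<^sup>2"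
      by (simp add: norm_mult power_mult_distrib mult_right_mono power_mono)
    then show "ennreal ((cmod (m (Complex \<alpha> \<xi>) * U (Complex \<alpha> \<xi>)))\<^sup>2) \<le> ennreal (b\<^sup>2) * ennreal ((cmod (U (Complex \<alpha> \<xi>)))\<^sup>2)"
      by (simp add: ennreal_mult'[symmetric] ennreal_leI)
  qed
  also have "\<dots> = ennreal (b\<^sup>2) * (\<integral>\<^sup>+ \<xi>. ennreal ((cmod (U (Complex \<alpha> \<xi>)))\<^sup>2) \<partial>lborel)"
    by (rule nn_integral_cmult) (use meas_line[OF U \<alpha>] in measurable)
  also have "\<dots> \<le> ennreal (b\<^sup>2) * (SUP \<alpha>\<in>{a<..}. \<integral>\<^sup>+ \<xi>. ennreal ((cmod (U (Complex \<alpha> \<xi>)))\<^sup>2) \<partial>lborel)"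
    by (intro mult_left_mono SUP_upper) (use \<alpha> in auto)
  finally show "(\<integral>\<^sup>+ \<xi>. ennreal ((cmod (m (Complex \<alpha> \<xi>) * U (Complex \<alpha> \<xi>)))\<^sup>2) \<partial>lborel) \<le> ennreal (b\<^sup>2) * (SUP \<alpha>\<in>{a<..}. \<integral>\<^sup>+ \<xi>. ennreal ((cmod (U (Complex \<alpha> \<xi>)))\<^sup>2) \<partial>lborel)" .
qed

lemma mult_H2:
  assumes U: "U \<in> H2 a" and mh: "m holomorphic_on half_plane a"
    and mb: "\<And>p. p \<in> half_plane a \<Longrightarrow> cmod (m p) \<le> b" and b: "b \<ge> 0"
  shows "(\<lambda>p. m p * U p) \<in> H2 a" "H2_norm a (\<lambda>p. m p * U p) \<le> b * H2_norm a U"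
proof -
  have hs: "hardy_sq a (\<lambda>p. m p * U p) \<le> ennreal (b\<^sup>2) * hardy_sq a U"
    by (rule mult_hardy[OF H2_cont[OF U] mb b])
  have fin: "hardy_sq a U < \<infinity>" using U by (simp add: H2_def)
  then have fin2: "ennreal (b\<^sup>2) * hardy_sq a U < \<infinity>" by (simp add: ennreal_mult_less_top)
  show "(\<lambda>p. m p * U p) \<in> H2 a" using U mh hs fin2
    by (auto simp: H2_def intro!: holomorphic_intros)
  have "enn2real (hardy_sq a (\<lambda>p. m p * U p)) \<le> enn2real (ennreal (b\<^sup>2) * hardy_sq a U)"
    using hs fin2 by (simp add: enn2real_mono)
  also have "\<dots> = b\<^sup>2 * enn2real (hardy_sq a U)" by (simp add: enn2real_mult)
  finally have "sqrt (enn2real (hardy_sq a (\<lambda>p. m p * U p))) \<le> sqrt (b\<^sup>2 * enn2real (hardy_sq a U))"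
    by (rule real_sqrt_le_mono)
  also have "\<dots> = b * sqrt (enn2real (hardy_sq a U))" using b by (simp add: real_sqrt_mult)
  finally show "H2_norm a (\<lambda>p. m p * U p) \<le> b * H2_norm a U" by (simp add: H2_norm_def)
qed

lemma wfun_holo:
  assumes "\<kappa> > 0" "a \<ge> 0"
  shows "wfun \<kappa> holomorphic_on half_plane a"
proof -
  have "(\<lambda>p. p * (1 / csqrt (1 + (complex_of_real \<kappa>)\<^sup>2 * p\<^sup>2))) holomorphic_on half_plane a"
  proof (intro holomorphic_intros)
    fix p assume "p \<in> half_plane a"
    then have "Re p > 0" using assms by (simp add: half_plane_def)
    then have *: "1 + (complex_of_real \<kappa>)\<^sup>2 * p\<^sup>2 \<notin> \<real>\<^sub>\<le>\<^sub>0" using zarg_notin[OF assms(1)] by blast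
    then show "1 + (complex_of_real \<kappa>)\<^sup>2 * p\<^sup>2 \<notin> \<real>\<^sub>\<le>\<^sub>0" .
    from * have "1 + (complex_of_real \<kappa>)\<^sup>2 * p\<^sup>2 \<noteq> 0" by auto
    then show "csqrt (1 + (complex_of_real \<kappa>)\<^sup>2 * p\<^sup>2) \<noteq> 0" by simp
  qed
  then show ?thesis by (simp add: wfun_def[abs_def] Ktilde_def)
qed

lemma semigrp_eq: "semigrp \<kappa> t U = (\<lambda>p. exp (- wfun \<kappa> p * of_real t) * U p)"
  by (simp add: semigrp_def wfun_def)



lemma H2_fin: "U \<in> H2 a \<Longrightarrow> hardy_sq a U < \<infinity>"
  by (simp add: H2_def)

lemma line_nn_fin:
  assumes "U \<in> H2 a" "\<alpha> > a"
  shows "(\<integral>\<^sup>+ \<xi>. ennreal ((cmod (U (Complex \<alpha> \<xi>)))\<^sup>2) \<partial>lborel) < \<infinity>"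
  using line_le_hardy[OF assms(2), of U] H2_fin[OF assms(1)] by (meson order.strict_trans1)

lemma line_meas2:
  assumes "U \<in> H2 a" "\<alpha> > a"
  shows "(\<lambda>\<xi>. U (Complex \<alpha> \<xi>)) \<in> borel_measurable lborel"
  by (rule meas_line[OF H2_cont[OF assms(1)] assms(2)])

lemma line_L2:
  assumes "U \<in> H2 a" "\<alpha> > a"
  shows "integrable lborel (\<lambda>\<xi>. (cmod (U (Complex \<alpha> \<xi>)))\<^sup>2)"
  unfolding integrable_iff_bounded
proof
  show "(\<lambda>\<xi>. (cmod (U (Complex \<alpha> \<xi>)))\<^sup>2) \<in> borel_measurable lborel"
    using line_meas2[OF assms] by measurable
  show "(\<integral>\<^sup>+ \<xi>. ennreal (norm ((cmod (U (Complex \<alpha> \<xi>)))\<^sup>2)) \<partial>lborel) < \<infinity>"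
    using line_nn_fin[OF assms] by simp
qed

lemma line_nn_eq:
  assumes "U \<in> H2 a" "\<alpha> > a"
  shows "(\<integral>\<^sup>+ \<xi>. ennreal ((cmod (U (Complex \<alpha> \<xi>)))\<^sup>2) \<partial>lborel) = ennreal (LINT \<xi>|lborel. (cmod (U (Complex \<alpha> \<xi>)))\<^sup>2)"
  by (rule nn_integral_eq_integral[OF line_L2[OF assms]]) auto

lemma cross_integrable:
  assumes U: "U \<in> H2 a" and "\<alpha> > a" "\<beta> > a"
  shows "integrable lborel (\<lambda>\<xi>. U (Complex \<alpha> \<xi>) * cnj (U (Complex \<beta> \<xi>)))"
proof (rule Bochner_Integration.integrable_bound)
  show "integrable lborel (\<lambda>\<xi>. (cmod (U (Complex \<alpha> \<xi>)))\<^sup>2 + (cmod (U (Complex \<beta> \<xi>)))\<^sup>2)"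
    using line_L2[OF U assms(2)] line_L2[OF U assms(3)] by simp
  show "(\<lambda>\<xi>. U (Complex \<alpha> \<xi>) * cnj (U (Complex \<beta> \<xi>))) \<in> borel_measurable lborel"
  proof -
    have "continuous_on UNIV (\<lambda>\<xi>. U (Complex \<alpha> \<xi>) * cnj (U (Complex \<beta> \<xi>)))"
      using cont_line[OF H2_cont[OF U] assms(2)] cont_line[OF H2_cont[OF U] assms(3)]
      by (intro continuous_intros) auto
    then show ?thesis by (simp add: borel_measurable_continuous_onI)
  qed
  show "AE \<xi> in lborel. norm (U (Complex \<alpha> \<xi>) * cnj (U (Complex \<beta> \<xi>))) \<le> norm ((cmod (U (Complex \<alpha> \<xi>)))\<^sup>2 + (cmod (U (Complex \<beta> \<xi>)))\<^sup>2)"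
  proof (rule AE_I2)
    fix \<xi>
    have "cmod (U (Complex \<alpha> \<xi>)) * cmod (U (Complex \<beta> \<xi>)) \<le> (cmod (U (Complex \<alpha> \<xi>)))\<^sup>2 + (cmod (U (Complex \<beta> \<xi>)))\<^sup>2"
    proof -
      have "2 * cmod (U (Complex \<alpha> \<xi>)) * cmod (U (Complex \<beta> \<xi>)) \<le> (cmod (U (Complex \<alpha> \<xi>)))\<^sup>2 + (cmod (U (Complex \<beta> \<xi>)))\<^sup>2"
        by (rule sum_squares_bound)
      moreover have "cmod (U (Complex \<alpha> \<xi>)) * cmod (U (Complex \<beta> \<xi>)) \<ge> 0" by simp
      ultimately show ?thesis by linarith
    qed
    then show "norm (U (Complex \<alpha> \<xi>) * cnj (U (Complex \<beta> \<xi>))) \<le> norm ((cmod (U (Complex \<alpha> \<xi>)))\<^sup>2 + (cmod (U (Complex \<beta> \<xi>)))\<^sup>2)"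
      by (simp add: norm_mult)
  qed
qed

lemma tails:
  fixes \<psi> :: "real \<Rightarrow> ennreal"
  assumes fin: "(\<integral>\<^sup>+ y. \<psi> y \<partial>lborel) < \<infinity>" and e: "e > 0"
  shows "\<exists>y\<ge>N. \<psi> y < ennreal e" "\<exists>y\<le>-N. \<psi> y < ennreal e"
proof -
  have inf: "False" if S: "S \<in> sets lborel" "emeasure lborel S = \<infinity>" "\<forall>y\<in>S. \<psi> y \<ge> ennreal e" for S
  proof -
    have "(\<integral>\<^sup>+ y. ennreal e * indicator S y \<partial>lborel) \<le> (\<integral>\<^sup>+ y. \<psi> y \<partial>lborel)"
      using S(3) by (intro nn_integral_mono) (auto split: split_indicator)
    moreover have "(\<integral>\<^sup>+ y. ennreal e * indicator S y \<partial>lborel) = \<infinity>"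
      using S e by (simp add: nn_integral_cmult_indicator ennreal_mult_top)
    ultimately show False using fin by simp
  qed
  have m1: "emeasure lborel {N..} = \<infinity>"
  proof -
    have "emeasure lborel {N..N + real n} \<le> emeasure lborel {N..}" for n
      by (rule emeasure_mono) auto
    then have le: "ennreal (real n) \<le> emeasure lborel {N..}" for n by simp
    show ?thesis
    proof (rule ccontr)
      assume "emeasure lborel {N..} \<noteq> \<infinity>"
      then obtain n where "emeasure lborel {N..} < of_nat n" using ennreal_Ex_less_of_nat by (auto simp: top.not_eq_extremum)
      with le[of n] show False by (simp add: ennreal_of_nat_eq_real_of_nat)
    qed
  qed
  have m2: "emeasure lborel {..-N} = \<infinity>"
  proof -
    have "emeasure lborel {-N - real n..-N} \<le> emeasure lborel {..-N}" for n
      by (rule emeasure_mono) auto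
    then have le: "ennreal (real n) \<le> emeasure lborel {..-N}" for n by simp
    show ?thesis
    proof (rule ccontr)
      assume "emeasure lborel {..-N} \<noteq> \<infinity>"
      then obtain n where "emeasure lborel {..-N} < of_nat n" using ennreal_Ex_less_of_nat by (auto simp: top.not_eq_extremum)
      with le[of n] show False by (simp add: ennreal_of_nat_eq_real_of_nat)
    qed
  qed
  show "\<exists>y\<ge>N. \<psi> y < ennreal e" using inf[of "{N..}"] m1 by (force simp: not_less)
  show "\<exists>y\<le>-N. \<psi> y < ennreal e" using inf[of "{..-N}"] m2 by (force simp: not_less)
qed



lemma vertical_shift:
  assumes U: "U \<in> H2 a" and a1: "a < \<alpha>1" and a12: "\<alpha>1 < \<alpha>2" and a2: "\<alpha>2 < c - a"
  shows "(LINT \<xi>|lborel. U (Complex \<alpha>1 \<xi>) * cnj (U (Complex (c-\<alpha>1) \<xi>)))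
       = (LINT \<xi>|lborel. U (Complex \<alpha>2 \<xi>) * cnj (U (Complex (c-\<alpha>2) \<xi>)))"
proof -
  define f where "f s = U s * cnj (U (cnj (complex_of_real c - s)))" for s
  define S where "S = {s. a < Re s \<and> Re s < c - a}"
  have fline: "f (Complex \<alpha> \<xi>) = U (Complex \<alpha> \<xi>) * cnj (U (Complex (c-\<alpha>) \<xi>))" for \<alpha> \<xi>
  proof -
    have "cnj (complex_of_real c - Complex \<alpha> \<xi>) = Complex (c-\<alpha>) \<xi>" by (simp add: complex_eq_iff)
    then show ?thesis by (simp add: f_def)
  qed
  have Uh: "U holomorphic_on half_plane a" using U by (simp add: H2_def)
  have cnjhp: "cnj ` half_plane a = half_plane a"
    by (auto simp: half_plane_def image_iff intro!: exI[of _ "cnj _"])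
  have g: "(cnj \<circ> U \<circ> cnj) holomorphic_on half_plane a"
    by (rule holomorphic_on_compose_cnj_cnj) (simp_all add: cnjhp Uh open_half_plane)
  have fh: "f holomorphic_on S"
  proof -
    have "((cnj \<circ> U \<circ> cnj) \<circ> (\<lambda>s. complex_of_real c - s)) holomorphic_on S"
      by (rule holomorphic_on_compose_gen[OF _ g]) (auto simp: S_def half_plane_def intro!: holomorphic_intros)
    moreover have "U holomorphic_on S" by (rule holomorphic_on_subset[OF Uh]) (auto simp: S_def half_plane_def)
    ultimately show ?thesis unfolding f_def[abs_def] by (auto intro!: holomorphic_intros simp: o_def)
  qed
  have fc: "continuous_on S f" by (rule holomorphic_on_imp_continuous_on[OF fh])
  have convS: "convex S"
  proof -
    have "S = {s. a < Re s} \<inter> {s. Re s < c - a}" by (auto simp: S_def)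
    then show ?thesis by (simp add: convex_Int convex_halfspace_Re_gt convex_halfspace_Re_lt)
  qed
  have H: "hardy_sq a U < \<infinity>" using U by (simp add: H2_def)
  define x where "x t = \<alpha>1 + t * (\<alpha>2 - \<alpha>1)" for t
  have xin: "\<alpha>1 \<le> x t \<and> x t \<le> \<alpha>2" if "t \<in> {0..1}" for t
  proof -
    have "t * (\<alpha>2 - \<alpha>1) \<le> 1 * (\<alpha>2 - \<alpha>1)" using that a12 by (intro mult_right_mono) auto
    moreover have "t * (\<alpha>2 - \<alpha>1) \<ge> 0" using that a12 by simp
    ultimately show ?thesis by (simp add: x_def)
  qed
  have xS: "Complex (x t) y \<in> S" if "t \<in> {0..1}" for t y
    using xin[OF that] a1 a2 by (auto simp: S_def)
  define F where "F z = ennreal (norm (indicator ({0..1} \<times> UNIV) z *\<^sub>R f (Complex (x (fst z)) (snd z))))" for z :: "real \<times> real"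
  have Fsimp: "F (t, y) = ennreal (cmod (f (Complex (x t) y))) * indicator {0..1} t" for t y
    by (simp add: F_def indicator_def)
  have Fmeas: "F \<in> borel_measurable (lborel \<Otimes>\<^sub>M lborel)"
  proof -
    have "continuous_on ({0..1} \<times> UNIV) (\<lambda>z::real\<times>real. f (Complex (x (fst z)) (snd z)))"
    proof (rule continuous_on_compose2[OF fc])
      show "continuous_on ({0..1} \<times> UNIV) (\<lambda>z::real\<times>real. Complex (x (fst z)) (snd z))"
        by (simp add: Complex_eq x_def continuous_intros)
      show "(\<lambda>z::real\<times>real. Complex (x (fst z)) (snd z)) ` ({0..1} \<times> UNIV) \<subseteq> S"
        using xS by auto
    qed
    then have "(\<lambda>z. indicator ({0..1} \<times> UNIV) z *\<^sub>R f (Complex (x (fst z)) (snd z))) \<in> borel_measurable borel"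
      by (intro borel_measurable_continuous_on_indicator borel_closed closed_Times) auto
    then have "F \<in> borel_measurable borel" unfolding F_def by measurable
    then show ?thesis by (simp add: lborel_prod)
  qed
  define \<psi> where "\<psi> y = (\<integral>\<^sup>+t. F (t, y) \<partial>lborel)" for y
  have fin: "(\<integral>\<^sup>+ y. \<psi> y \<partial>lborel) < \<infinity>"
  proof -
    have "(\<integral>\<^sup>+ y. \<psi> y \<partial>lborel) = (\<integral>\<^sup>+ t. (\<integral>\<^sup>+ y. F (t, y) \<partial>lborel) \<partial>lborel)"
      unfolding \<psi>_def by (rule lborel_pair.Fubini') (use Fmeas in simp)
    also have "\<dots> \<le> (\<integral>\<^sup>+ t. (2 * hardy_sq a U) * indicator {0..1::real} t \<partial>lborel)"
    proof (rule nn_integral_mono)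
      fix t :: real
      show "(\<integral>\<^sup>+ y. F (t, y) \<partial>lborel) \<le> (2 * hardy_sq a U) * indicator {0..1} t"
      proof (cases "t \<in> {0..1}")
        case False then show ?thesis by (simp add: Fsimp)
      next
        case True
        have x1: "x t > a" and x2: "c - x t > a" using xin[OF True] a1 a2 by auto
        have "(\<integral>\<^sup>+ y. F (t, y) \<partial>lborel) \<le> (\<integral>\<^sup>+ y. ennreal ((cmod (U (Complex (x t) y)))\<^sup>2) + ennreal ((cmod (U (Complex (c - x t) y)))\<^sup>2) \<partial>lborel)"
        proof (rule nn_integral_mono)
          fix y
          have "cmod (f (Complex (x t) y)) \<le> (cmod (U (Complex (x t) y)))\<^sup>2 + (cmod (U (Complex (c - x t) y)))\<^sup>2"
          proof -
            have "2 * cmod (U (Complex (x t) y)) * cmod (U (Complex (c - x t) y)) \<le> (cmod (U (Complex (x t) y)))\<^sup>2 + (cmod (U (Complex (c - x t) y)))\<^sup>2"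
              by (rule sum_squares_bound)
            moreover have "cmod (U (Complex (x t) y)) * cmod (U (Complex (c - x t) y)) \<ge> 0" by simp
            ultimately have "cmod (U (Complex (x t) y)) * cmod (U (Complex (c - x t) y)) \<le> (cmod (U (Complex (x t) y)))\<^sup>2 + (cmod (U (Complex (c - x t) y)))\<^sup>2" by linarith
            then show ?thesis by (simp add: fline norm_mult)
          qed
          then show "F (t, y) \<le> ennreal ((cmod (U (Complex (x t) y)))\<^sup>2) + ennreal ((cmod (U (Complex (c - x t) y)))\<^sup>2)"
            using True by (simp add: Fsimp ennreal_plus[symmetric] del: ennreal_plus)
        qed
        also have "\<dots> = (\<integral>\<^sup>+ y. ennreal ((cmod (U (Complex (x t) y)))\<^sup>2) \<partial>lborel) + (\<integral>\<^sup>+ y. ennreal ((cmod (U (Complex (c - x t) y)))\<^sup>2) \<partial>lborel)"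
          by (rule nn_integral_add) (use line_meas2[OF U x1] line_meas2[OF U x2] in measurable)
        also have "\<dots> \<le> hardy_sq a U + hardy_sq a U"
          by (intro add_mono line_le_hardy x1 x2)
        also have "\<dots> = (2 * hardy_sq a U) * indicator {0..1} t" using True by (simp add: mult_2)
        finally show ?thesis .
      qed
    qed
    also have "\<dots> = 2 * hardy_sq a U" by (simp add: nn_integral_cmult_indicator)
    also have "\<dots> < \<infinity>" using H by (simp add: ennreal_mult_less_top)
    finally show ?thesis .
  qed
  define Ih where "Ih y = integral {0..1} (\<lambda>t. cmod (f (Complex (x t) y)))" for y
  have horiz: "\<psi> y = ennreal (Ih y) \<and> Ih y \<ge> 0 \<and>
      cmod (contour_integral (linepath (Complex \<alpha>1 y) (Complex \<alpha>2 y)) f) \<le> (\<alpha>2 - \<alpha>1) * Ih y" for y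
  proof -
    have contx: "continuous_on {0..1} (\<lambda>t. f (Complex (x t) y))"
    proof (rule continuous_on_compose2[OF fc])
      show "continuous_on {0..1} (\<lambda>t. Complex (x t) y)" by (simp add: Complex_eq x_def continuous_intros)
    qed (use xS in auto)
    have int1: "(\<lambda>t. cmod (f (Complex (x t) y))) integrable_on {0..1}"
      by (rule integrable_continuous_interval) (intro continuous_intros contx)
    have nn: "Ih y \<ge> 0" unfolding Ih_def by (rule integral_nonneg[OF int1]) auto
    have "\<psi> y = (\<integral>\<^sup>+t. ennreal (cmod (f (Complex (x t) y))) * indicator {0..1} t \<partial>lborel)"
      by (simp add: \<psi>_def Fsimp)
    also have "\<dots> = ennreal (Ih y)" unfolding Ih_def
      by (rule nn_integral_has_integral_lebesgue'[OF _ integrable_integral[OF int1]]) simp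
    finally have e1: "\<psi> y = ennreal (Ih y)" .
    have lp: "linepath (Complex \<alpha>1 y) (Complex \<alpha>2 y) t = Complex (x t) y" for t
      by (simp add: linepath_def complex_eq_iff x_def algebra_simps)
    have seg: "closed_segment (Complex \<alpha>1 y) (Complex \<alpha>2 y) \<subseteq> S"
      by (rule closed_segment_subset[OF _ _ convS]) (use a1 a12 a2 in \<open>auto simp: S_def\<close>)
    have ci: "f contour_integrable_on (linepath (Complex \<alpha>1 y) (Complex \<alpha>2 y))"
      by (rule contour_integrable_continuous_linepath) (rule continuous_on_subset[OF fc seg])
    have "((\<lambda>t. f (Complex (x t) y) * (Complex \<alpha>2 y - Complex \<alpha>1 y)) has_integral
            contour_integral (linepath (Complex \<alpha>1 y) (Complex \<alpha>2 y)) f) {0..1}"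
      using has_contour_integral_integral[OF ci] unfolding has_contour_integral_linepath lp .
    then have hi: "contour_integral (linepath (Complex \<alpha>1 y) (Complex \<alpha>2 y)) f = integral {0..1} (\<lambda>t. f (Complex (x t) y) * (Complex \<alpha>2 y - Complex \<alpha>1 y))"
      and hint: "(\<lambda>t. f (Complex (x t) y) * (Complex \<alpha>2 y - Complex \<alpha>1 y)) integrable_on {0..1}"
      by (metis integral_unique, metis has_integral_integrable)
    have "cmod (contour_integral (linepath (Complex \<alpha>1 y) (Complex \<alpha>2 y)) f)
        \<le> integral {0..1} (\<lambda>t. cmod (f (Complex (x t) y)) * (\<alpha>2 - \<alpha>1))"
      unfolding hi
    proof (rule integral_norm_bound_integral[OF hint])
      show "(\<lambda>t. cmod (f (Complex (x t) y)) * (\<alpha>2 - \<alpha>1)) integrable_on {0..1}"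
        using int1 by (rule integrable_on_mult_left)
      fix t show "cmod (f (Complex (x t) y) * (Complex \<alpha>2 y - Complex \<alpha>1 y)) \<le> cmod (f (Complex (x t) y)) * (\<alpha>2 - \<alpha>1)"
      proof -
        have "Complex \<alpha>2 y - Complex \<alpha>1 y = complex_of_real (\<alpha>2 - \<alpha>1)" by (simp add: complex_eq_iff)
        then show ?thesis using a12 by (simp add: norm_mult del: of_real_diff)
      qed
    qed
    also have "\<dots> = (\<alpha>2 - \<alpha>1) * Ih y" unfolding Ih_def by (simp add: mult.commute)
    finally show ?thesis using e1 nn by blast
  qed

  have "\<forall>n::nat. \<exists>R. R \<ge> real n + 1 \<and> \<psi> R < ennreal (1 / (real n + 1))"
    using tails(1)[OF fin] by (metis divide_pos_pos of_nat_0_le_iff zero_less_one add_nonneg_pos)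
  then obtain Rp where Rp: "\<And>n. Rp n \<ge> real n + 1" "\<And>n. \<psi> (Rp n) < ennreal (1 / (real n + 1))"
    by metis
  have "\<forall>n::nat. \<exists>R. R \<ge> real n + 1 \<and> \<psi> (-R) < ennreal (1 / (real n + 1))"
  proof
    fix n :: nat
    obtain y where "y \<le> -(real n + 1)" "\<psi> y < ennreal (1 / (real n + 1))"
      using tails(2)[OF fin, of "1 / (real n + 1)" "real n + 1"] by auto
    then show "\<exists>R. R \<ge> real n + 1 \<and> \<psi> (-R) < ennreal (1 / (real n + 1))"
      by (intro exI[of _ "-y"]) auto
  qed
  then obtain Rm where Rm: "\<And>n. Rm n \<ge> real n + 1" "\<And>n. \<psi> (- Rm n) < ennreal (1 / (real n + 1))"
    by metis
  have Ihs: "Ih (Rp n) < 1 / (real n + 1)" "Ih (- Rm n) < 1 / (real n + 1)" for n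
    using Rp(2)[of n] Rm(2)[of n] horiz[of "Rp n"] horiz[of "- Rm n"] by (auto simp: ennreal_less_iff)
  define J where "J \<alpha> n = integral {- Rm n..Rp n} (\<lambda>\<xi>. f (Complex \<alpha> \<xi>))" for \<alpha> n
  have rect: "cmod (J \<alpha>2 n - J \<alpha>1 n) \<le> (\<alpha>2 - \<alpha>1) * (Ih (Rp n) + Ih (- Rm n))" for n
  proof -
    define a1' where "a1' = Complex \<alpha>1 (- Rm n)"
    define a2' where "a2' = Complex \<alpha>2 (- Rm n)"
    define a3' where "a3' = Complex \<alpha>2 (Rp n)"
    define a4' where "a4' = Complex \<alpha>1 (Rp n)"
    have Rpos: "Rp n > 0" "Rm n > 0" using Rp(1)[of n] Rm(1)[of n] by linarith+
    have rp: "rectpath a1' a3' = linepath a1' a2' +++ linepath a2' a3' +++ linepath a3' a4' +++ linepath a4' a1'"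
      by (simp add: rectpath_def Let_def a1'_def a2'_def a3'_def a4'_def)
    have inS: "a1' \<in> S" "a2' \<in> S" "a3' \<in> S" "a4' \<in> S"
      using a1 a12 a2 by (auto simp: S_def a1'_def a2'_def a3'_def a4'_def)
    have ci: "f contour_integrable_on linepath u v" if "u \<in> S" "v \<in> S" for u v
      by (rule contour_integrable_continuous_linepath, rule continuous_on_subset[OF fc],
          rule closed_segment_subset[OF that convS])
    have hci: "(f has_contour_integral contour_integral (linepath u v) f) (linepath u v)" if "u \<in> S" "v \<in> S" for u v
      by (rule has_contour_integral_integral[OF ci[OF that]])
    have "path_image (rectpath a1' a3') \<subseteq> cbox a1' a3'"
      by (rule path_image_rectpath_subset_cbox) (use a12 Rpos in \<open>auto simp: a1'_def a3'_def\<close>)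
    also have "cbox a1' a3' \<subseteq> S"
      using a1 a12 a2 by (auto simp: S_def a1'_def a3'_def in_cbox_complex_iff)
    finally have pis: "path_image (rectpath a1' a3') \<subseteq> S" .
    have zero: "(f has_contour_integral 0) (rectpath a1' a3')"
      by (rule Cauchy_theorem_convex_simple[OF fh convS]) (use pis in auto)
    have sum: "(f has_contour_integral (contour_integral (linepath a1' a2') f + (contour_integral (linepath a2' a3') f
        + (contour_integral (linepath a3' a4') f + contour_integral (linepath a4' a1') f)))) (rectpath a1' a3')"
      unfolding rp using inS
      by (intro has_contour_integral_join hci valid_path_join) auto
    have eq0: "contour_integral (linepath a1' a2') f + (contour_integral (linepath a2' a3') f
        + (contour_integral (linepath a3' a4') f + contour_integral (linepath a4' a1') f)) = 0"
      using has_contour_integral_unique[OF sum zero] .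
    have v2: "contour_integral (linepath a2' a3') f = \<i> * J \<alpha>2 n"
      unfolding J_def by (rule contour_integral_linepath_same_Re) (use Rpos in \<open>auto simp: a2'_def a3'_def\<close>)
    have v1: "contour_integral (linepath a1' a4') f = \<i> * J \<alpha>1 n"
      unfolding J_def by (rule contour_integral_linepath_same_Re) (use Rpos in \<open>auto simp: a1'_def a4'_def\<close>)
    have r1: "contour_integral (linepath a4' a1') f = - contour_integral (linepath a1' a4') f"
      using contour_integral_reversepath[of "linepath a1' a4'" f] by simp
    have r2: "contour_integral (linepath a3' a4') f = - contour_integral (linepath a4' a3') f"
      using contour_integral_reversepath[of "linepath a4' a3'" f] by simp
    have "\<i> * (J \<alpha>2 n - J \<alpha>1 n) = contour_integral (linepath a4' a3') f - contour_integral (linepath a1' a2') f"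
      using eq0 unfolding r1 r2 v1 v2 by (simp add: algebra_simps)
    then have "cmod (J \<alpha>2 n - J \<alpha>1 n) = cmod (contour_integral (linepath a4' a3') f - contour_integral (linepath a1' a2') f)"
      by (metis norm_ii mult_1 norm_mult)
    also have "\<dots> \<le> cmod (contour_integral (linepath a4' a3') f) + cmod (contour_integral (linepath a1' a2') f)"
      by (rule norm_triangle_ineq4)
    also have "\<dots> \<le> (\<alpha>2 - \<alpha>1) * Ih (Rp n) + (\<alpha>2 - \<alpha>1) * Ih (- Rm n)"
      using horiz[of "Rp n"] horiz[of "- Rm n"] by (intro add_mono) (simp_all add: a1'_def a2'_def a3'_def a4'_def)
    finally show ?thesis by (simp add: distrib_left)
  qed
  have lim: "(\<lambda>n. J \<alpha> n) \<longlonglongrightarrow> (LINT \<xi>|lborel. f (Complex \<alpha> \<xi>))" if "\<alpha> > a" "\<alpha> < c - a" for \<alpha>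
  proof -
    have gi: "integrable lborel (\<lambda>\<xi>. f (Complex \<alpha> \<xi>))"
      unfolding fline by (rule cross_integrable[OF U]) (use that in auto)
    have Jn: "J \<alpha> n = (LINT \<xi>|lborel. indicator {- Rm n..Rp n} \<xi> *\<^sub>R f (Complex \<alpha> \<xi>))" for n
    proof -
      have "set_integrable lborel {- Rm n..Rp n} (\<lambda>\<xi>. f (Complex \<alpha> \<xi>))"
        unfolding set_integrable_def by (rule integrable_mult_indicator) (auto intro: gi)
      from set_borel_integral_eq_integral(2)[OF this] show ?thesis
        by (simp add: J_def set_lebesgue_integral_def)
    qed
    show ?thesis unfolding Jn
    proof (rule integral_dominated_convergence[where w = "\<lambda>\<xi>. norm (f (Complex \<alpha> \<xi>))"])
      show "(\<lambda>\<xi>. f (Complex \<alpha> \<xi>)) \<in> borel_measurable lborel" using gi by auto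
      show "(\<lambda>\<xi>. indicator {- Rm n..Rp n} \<xi> *\<^sub>R f (Complex \<alpha> \<xi>)) \<in> borel_measurable lborel" for n
        using gi by auto
      show "integrable lborel (\<lambda>\<xi>. norm (f (Complex \<alpha> \<xi>)))" using gi by auto
      show "AE \<xi> in lborel. (\<lambda>n. indicator {- Rm n..Rp n} \<xi> *\<^sub>R f (Complex \<alpha> \<xi>)) \<longlonglongrightarrow> f (Complex \<alpha> \<xi>)"
      proof (rule AE_I2)
        fix \<xi> :: real
        obtain N :: nat where N: "real N \<ge> \<bar>\<xi>\<bar>" using real_arch_simple by blast
        have "\<forall>n\<ge>N. indicator {- Rm n..Rp n} \<xi> *\<^sub>R f (Complex \<alpha> \<xi>) = f (Complex \<alpha> \<xi>)"
        proof (intro allI impI)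
          fix n assume "n \<ge> N"
          then have "real n \<ge> \<bar>\<xi>\<bar>" using N by linarith
          then have "\<xi> \<in> {- Rm n..Rp n}" using Rp(1)[of n] Rm(1)[of n] by auto
          then show "indicator {- Rm n..Rp n} \<xi> *\<^sub>R f (Complex \<alpha> \<xi>) = f (Complex \<alpha> \<xi>)" by simp
        qed
        then show "(\<lambda>n. indicator {- Rm n..Rp n} \<xi> *\<^sub>R f (Complex \<alpha> \<xi>)) \<longlonglongrightarrow> f (Complex \<alpha> \<xi>)"
          by (intro tendsto_eventually) (auto simp: eventually_sequentially)
      qed
      show "AE \<xi> in lborel. norm (indicator {- Rm n..Rp n} \<xi> *\<^sub>R f (Complex \<alpha> \<xi>)) \<le> norm (f (Complex \<alpha> \<xi>))" for n
        by (rule AE_I2) (simp add: indicator_def)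
    qed
  qed
  have l1: "(\<lambda>n. J \<alpha>2 n - J \<alpha>1 n) \<longlonglongrightarrow> (LINT \<xi>|lborel. f (Complex \<alpha>2 \<xi>)) - (LINT \<xi>|lborel. f (Complex \<alpha>1 \<xi>))"
    by (intro tendsto_diff lim) (use a1 a12 a2 in auto)
  have l0: "(\<lambda>n. J \<alpha>2 n - J \<alpha>1 n) \<longlonglongrightarrow> 0"
  proof (rule Lim_null_comparison)
    show "\<forall>\<^sub>F n in sequentially. norm (J \<alpha>2 n - J \<alpha>1 n) \<le> (\<alpha>2 - \<alpha>1) * (2 / (real n + 1))"
    proof (rule always_eventually, rule allI)
      fix n
      have "(\<alpha>2 - \<alpha>1) * (Ih (Rp n) + Ih (- Rm n)) \<le> (\<alpha>2 - \<alpha>1) * (2 / (real n + 1))"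
        using Ihs[of n] a12 by (intro mult_left_mono) auto
      then show "norm (J \<alpha>2 n - J \<alpha>1 n) \<le> (\<alpha>2 - \<alpha>1) * (2 / (real n + 1))"
        using rect[of n] by simp
    qed
    show "(\<lambda>n. (\<alpha>2 - \<alpha>1) * (2 / (real n + 1))) \<longlonglongrightarrow> 0"
      by (intro tendsto_mult_right_zero) real_asymp
  qed
  have "(LINT \<xi>|lborel. f (Complex \<alpha>2 \<xi>)) - (LINT \<xi>|lborel. f (Complex \<alpha>1 \<xi>)) = 0"
    using LIMSEQ_unique[OF l1 l0] .
  then show ?thesis unfolding fline by simp
qed



definition Nf :: "(complex \<Rightarrow> complex) \<Rightarrow> real \<Rightarrow> real" where
  "Nf U \<alpha> = (LINT \<xi>|lborel. (cmod (U (Complex \<alpha> \<xi>)))\<^sup>2)"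

definition cross :: "(complex \<Rightarrow> complex) \<Rightarrow> real \<Rightarrow> real \<Rightarrow> complex" where
  "cross U \<alpha> \<beta> = (LINT \<xi>|lborel. U (Complex \<alpha> \<xi>) * cnj (U (Complex \<beta> \<xi>)))"

lemma cross_eq:
  assumes U: "U \<in> H2 a" and "\<alpha> > a" "\<beta> > a" "\<gamma> > a" "\<delta> > a" "\<alpha> + \<beta> = \<gamma> + \<delta>"
  shows "cross U \<alpha> \<beta> = cross U \<gamma> \<delta>"
proof -
  define c where "c = \<alpha> + \<beta>"
  have b: "\<beta> = c - \<alpha>" and d: "\<delta> = c - \<gamma>" using assms by (auto simp: c_def)
  have r: "\<alpha> < c - a" "\<gamma> < c - a" using assms by (auto simp: c_def)
  consider "\<alpha> < \<gamma>" | "\<alpha> = \<gamma>" | "\<gamma> < \<alpha>" by linarith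
  then show ?thesis
  proof cases
    case 1 then show ?thesis unfolding cross_def b d using vertical_shift[OF U assms(2) 1 r(2)] by simp
  next
    case 2 then show ?thesis by (simp add: b d)
  next
    case 3 then show ?thesis unfolding cross_def b d using vertical_shift[OF U assms(4) 3 r(1)] by simp
  qed
qed

lemma cross_diag:
  assumes "U \<in> H2 a" "\<alpha> > a"
  shows "cross U \<alpha> \<alpha> = complex_of_real (Nf U \<alpha>)"
proof -
  have "cross U \<alpha> \<alpha> = (LINT \<xi>|lborel. complex_of_real ((cmod (U (Complex \<alpha> \<xi>)))\<^sup>2))"
    unfolding cross_def complex_norm_square by (rule refl)
  then show ?thesis by (simp only: Nf_def integral_complex_of_real)
qed

lemma Nf_nonneg: "Nf U \<alpha> \<ge> 0"
  unfolding Nf_def by simp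

lemma Nf_le:
  assumes "U \<in> H2 a" "\<alpha> > a"
  shows "Nf U \<alpha> \<le> enn2real (hardy_sq a U)"
proof -
  have "ennreal (Nf U \<alpha>) \<le> hardy_sq a U"
    using line_nn_eq[OF assms] line_le_hardy[OF assms(2), of U] by (simp add: Nf_def)
  then show ?thesis using H2_fin[OF assms(1)]
  proof -
    assume le: "ennreal (Nf U \<alpha>) \<le> hardy_sq a U" and fin: "hardy_sq a U < \<infinity>"
    have "enn2real (ennreal (Nf U \<alpha>)) \<le> enn2real (hardy_sq a U)" by (rule enn2real_mono[OF le]) (use fin in simp)
    then show ?thesis using Nf_nonneg[of U \<alpha>] by simp
  qed
qed

lemma cross_CS:
  assumes U: "U \<in> H2 a" and "\<alpha> > a" "\<beta> > a"
  shows "(cmod (cross U \<alpha> \<beta>))\<^sup>2 \<le> Nf U \<alpha> * Nf U \<beta>"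
proof -
  let ?A = "\<lambda>\<xi>. cmod (U (Complex \<alpha> \<xi>))" and ?B = "\<lambda>\<xi>. cmod (U (Complex \<beta> \<xi>))"
  have mA: "?A \<in> borel_measurable lborel" using line_meas2[OF U assms(2)] by measurable
  have mB: "?B \<in> borel_measurable lborel" using line_meas2[OF U assms(3)] by measurable
  have iAB: "integrable lborel (\<lambda>\<xi>. ?A \<xi> * ?B \<xi>)"
  proof -
    have "(\<lambda>\<xi>. ?A \<xi> * ?B \<xi>) = (\<lambda>\<xi>. norm (U (Complex \<alpha> \<xi>) * cnj (U (Complex \<beta> \<xi>))))"
      by (simp add: norm_mult fun_eq_iff)
    then show ?thesis using integrable_norm[OF cross_integrable[OF U assms(2,3)]] by simp
  qed
  define L where "L = (LINT \<xi>|lborel. ?A \<xi> * ?B \<xi>)"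
  have L0: "L \<ge> 0" unfolding L_def by simp
  have "cmod (cross U \<alpha> \<beta>) \<le> (LINT \<xi>|lborel. norm (U (Complex \<alpha> \<xi>) * cnj (U (Complex \<beta> \<xi>))))"
    unfolding cross_def by (rule integral_norm_bound)
  also have "\<dots> = L" by (simp add: L_def norm_mult)
  finally have cL: "cmod (cross U \<alpha> \<beta>) \<le> L" .
  have "(\<integral>\<^sup>+\<xi>. ennreal (?A \<xi>) * ennreal (?B \<xi>) \<partial>lborel)\<^sup>2
      \<le> (\<integral>\<^sup>+\<xi>. ennreal (?A \<xi>) ^ 2 \<partial>lborel) * (\<integral>\<^sup>+\<xi>. ennreal (?B \<xi>) ^ 2 \<partial>lborel)"
    by (rule Cauchy_Schwarz_nn_integral) (use mA mB in measurable)
  moreover have "(\<integral>\<^sup>+\<xi>. ennreal (?A \<xi>) * ennreal (?B \<xi>) \<partial>lborel) = ennreal L"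
    unfolding L_def by (simp add: ennreal_mult'[symmetric] nn_integral_eq_integral[OF iAB])
  moreover have "(\<integral>\<^sup>+\<xi>. ennreal (?A \<xi>) ^ 2 \<partial>lborel) = ennreal (Nf U \<alpha>)"
    using line_nn_eq[OF U assms(2)] by (simp add: Nf_def ennreal_power)
  moreover have "(\<integral>\<^sup>+\<xi>. ennreal (?B \<xi>) ^ 2 \<partial>lborel) = ennreal (Nf U \<beta>)"
    using line_nn_eq[OF U assms(3)] by (simp add: Nf_def ennreal_power)
  ultimately have "ennreal (L\<^sup>2) \<le> ennreal (Nf U \<alpha> * Nf U \<beta>)"
    using L0 by (simp add: ennreal_power ennreal_mult'[symmetric] Nf_nonneg)
  then have "L\<^sup>2 \<le> Nf U \<alpha> * Nf U \<beta>"
    by (simp add: ennreal_le_iff mult_nonneg_nonneg Nf_nonneg)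
  moreover have "(cmod (cross U \<alpha> \<beta>))\<^sup>2 \<le> L\<^sup>2" using cL by (simp add: power_mono)
  ultimately show ?thesis by linarith
qed

lemma Nf_sq:
  assumes U: "U \<in> H2 a" and "x - h > a" "h > 0"
  shows "(Nf U x)\<^sup>2 \<le> Nf U (x - h) * Nf U (x + h)"
proof -
  have "cross U x x = cross U (x - h) (x + h)"
    by (rule cross_eq[OF U]) (use assms in auto)
  then have "complex_of_real (Nf U x) = cross U (x - h) (x + h)"
    using cross_diag[OF U, of x] assms by simp
  then have "(Nf U x)\<^sup>2 = (cmod (cross U (x - h) (x + h)))\<^sup>2"
    by (metis norm_of_real power2_abs)
  also have "\<dots> \<le> Nf U (x - h) * Nf U (x + h)"
    by (rule cross_CS[OF U]) (use assms in auto)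
  finally show ?thesis .
qed

lemma Nf_mono:
  assumes U: "U \<in> H2 a" and x: "x > a" and h: "h > 0"
  shows "Nf U (x + h) \<le> Nf U x"
proof (rule ccontr)
  assume "\<not> ?thesis"
  then have gt: "Nf U (x + h) > Nf U x" by simp
  define s where "s n = Nf U (x + real n * h)" for n :: nat
  have s0: "s 0 = Nf U x" and s1: "s 1 = Nf U (x + h)" by (simp_all add: s_def)
  have rec: "(s (Suc n))\<^sup>2 \<le> s n * s (Suc (Suc n))" for n
  proof -
    have "(Nf U (x + real (Suc n) * h))\<^sup>2 \<le> Nf U (x + real (Suc n) * h - h) * Nf U (x + real (Suc n) * h + h)"
    proof (rule Nf_sq[OF U])
      have "real n * h \<ge> 0" using h by simp
      then show "a < x + real (Suc n) * h - h" using x by (simp add: algebra_simps)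
    qed (use h in simp)
    then show ?thesis by (simp add: s_def algebra_simps)
  qed
  have spos0: "s 0 > 0"
  proof -
    have "(s 1)\<^sup>2 \<le> s 0 * s 2" using rec[of 0] by (simp add: numeral_2_eq_2)
    moreover have "s 1 > 0" using gt Nf_nonneg[of U x] s1 by linarith
    moreover have "s 0 \<ge> 0" by (simp add: s_def Nf_nonneg)
    moreover have "s 0 \<noteq> 0"
    proof
      assume "s 0 = 0"
      with \<open>(s 1)\<^sup>2 \<le> s 0 * s 2\<close> have "(s 1)\<^sup>2 \<le> 0" by simp
      with \<open>s 1 > 0\<close> show False by simp
    qed
    ultimately show ?thesis by linarith
  qed
  define r where "r = s 1 / s 0"
  have r1: "r > 1" using gt spos0 s0 s1 by (simp add: r_def)
  have ind: "s n > 0 \<and> s (Suc n) \<ge> r * s n" for n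
  proof (induction n)
    case 0 then show ?case using spos0 by (simp add: r_def)
  next
    case (Suc n)
    then have p: "s n > 0" and q: "s (Suc n) \<ge> r * s n" by auto
    have "r * s n > 0" using p r1 by simp
    then have p1: "s (Suc n) > 0" using q by linarith
    have "r * s (Suc n) * s n \<le> s (Suc n) * s (Suc n)"
      using q p1 by (simp add: mult.commute mult.left_commute mult_left_mono)
    also have "\<dots> \<le> s n * s (Suc (Suc n))" using rec[of n] by (simp add: power2_eq_square)
    finally have "r * s (Suc n) * s n \<le> s (Suc (Suc n)) * s n" by (simp add: mult.commute)
    then have "r * s (Suc n) \<le> s (Suc (Suc n))" using p by simp
    then show ?case using p1 by simp
  qed
  have grow: "s n \<ge> r ^ n * s 0" for n
  proof (induction n)
    case 0 then show ?case by simp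
  next
    case (Suc n)
    have "r ^ Suc n * s 0 = r * (r ^ n * s 0)" by simp
    also have "\<dots> \<le> r * s n" using Suc r1 by (simp add: mult_left_mono)
    also have "\<dots> \<le> s (Suc n)" using ind[of n] by simp
    finally show ?case .
  qed
  define M where "M = enn2real (hardy_sq a U)"
  have sM: "s n \<le> M" for n unfolding s_def M_def
  proof (rule Nf_le[OF U])
    have "real n * h \<ge> 0" using h by simp
    then show "a < x + real n * h" using x by linarith
  qed
  obtain n where "M / s 0 < r ^ n" using real_arch_pow[OF r1] by blast
  then have "M < r ^ n * s 0" using spos0 by (simp add: divide_less_eq)
  with grow[of n] sM[of n] show False by linarith
qed

lemma Nf_mono':
  assumes U: "U \<in> H2 a" and "\<alpha> > a" "\<alpha> \<le> \<beta>"
  shows "Nf U \<beta> \<le> Nf U \<alpha>"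
  using Nf_mono[OF U assms(2), of "\<beta> - \<alpha>"] assms by (cases "\<alpha> = \<beta>") auto

lemma diff_L2:
  assumes U: "U \<in> H2 a" and a: "\<alpha> > a" and ab: "\<alpha> \<le> \<beta>"
  shows "(LINT \<xi>|lborel. (cmod (U (Complex \<alpha> \<xi>) - U (Complex \<beta> \<xi>)))\<^sup>2) \<le> Nf U \<alpha> - Nf U \<beta>"
proof -
  have b: "\<beta> > a" using a ab by simp
  have m: "\<alpha> < (\<alpha> + \<beta>)/2 \<or> \<alpha> = (\<alpha> + \<beta>)/2" "(\<alpha>+\<beta>)/2 > a" "(\<alpha>+\<beta>)/2 \<le> \<beta>" using a ab by auto
  have ident: "(cmod (A - B))\<^sup>2 = (cmod A)\<^sup>2 + (cmod B)\<^sup>2 - 2 * Re (A * cnj B)" for A B :: complex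
    unfolding cmod_power2 by (simp add: power2_eq_square algebra_simps)
  have iA: "integrable lborel (\<lambda>\<xi>. (cmod (U (Complex \<alpha> \<xi>)))\<^sup>2)" by (rule line_L2[OF U a])
  have iB: "integrable lborel (\<lambda>\<xi>. (cmod (U (Complex \<beta> \<xi>)))\<^sup>2)" by (rule line_L2[OF U b])
  have iC: "integrable lborel (\<lambda>\<xi>. U (Complex \<alpha> \<xi>) * cnj (U (Complex \<beta> \<xi>)))" by (rule cross_integrable[OF U a b])
  have "(LINT \<xi>|lborel. (cmod (U (Complex \<alpha> \<xi>) - U (Complex \<beta> \<xi>)))\<^sup>2)
      = (LINT \<xi>|lborel. (cmod (U (Complex \<alpha> \<xi>)))\<^sup>2 + (cmod (U (Complex \<beta> \<xi>)))\<^sup>2 - 2 * Re (U (Complex \<alpha> \<xi>) * cnj (U (Complex \<beta> \<xi>))))"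
    by (simp add: ident)
  also have "\<dots> = Nf U \<alpha> + Nf U \<beta> - 2 * Re (cross U \<alpha> \<beta>)"
  proof -
    have iR: "integrable lborel (\<lambda>\<xi>. Re (U (Complex \<alpha> \<xi>) * cnj (U (Complex \<beta> \<xi>))))"
      by (rule integrable_bounded_linear[OF bounded_linear_Re iC])
    have "(LINT \<xi>|lborel. (cmod (U (Complex \<alpha> \<xi>)))\<^sup>2 + (cmod (U (Complex \<beta> \<xi>)))\<^sup>2 - 2 * Re (U (Complex \<alpha> \<xi>) * cnj (U (Complex \<beta> \<xi>))))
       = (LINT \<xi>|lborel. (cmod (U (Complex \<alpha> \<xi>)))\<^sup>2 + (cmod (U (Complex \<beta> \<xi>)))\<^sup>2) - (LINT \<xi>|lborel. 2 * Re (U (Complex \<alpha> \<xi>) * cnj (U (Complex \<beta> \<xi>))))"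
    proof (rule Bochner_Integration.integral_diff)
      show "integrable lborel (\<lambda>\<xi>. (cmod (U (Complex \<alpha> \<xi>)))\<^sup>2 + (cmod (U (Complex \<beta> \<xi>)))\<^sup>2)"
        by (rule Bochner_Integration.integrable_add[OF iA iB])
      show "integrable lborel (\<lambda>\<xi>. 2 * Re (U (Complex \<alpha> \<xi>) * cnj (U (Complex \<beta> \<xi>))))"
        by (rule integrable_mult_right) (rule iR)
    qed
    also have "(LINT \<xi>|lborel. (cmod (U (Complex \<alpha> \<xi>)))\<^sup>2 + (cmod (U (Complex \<beta> \<xi>)))\<^sup>2) = Nf U \<alpha> + Nf U \<beta>"
      unfolding Nf_def by (rule Bochner_Integration.integral_add[OF iA iB])
    also have "(LINT \<xi>|lborel. 2 * Re (U (Complex \<alpha> \<xi>) * cnj (U (Complex \<beta> \<xi>)))) = 2 * (LINT \<xi>|lborel. Re (U (Complex \<alpha> \<xi>) * cnj (U (Complex \<beta> \<xi>))))"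
      by (rule integral_mult_right_zero)
    also have "(LINT \<xi>|lborel. Re (U (Complex \<alpha> \<xi>) * cnj (U (Complex \<beta> \<xi>)))) = Re (cross U \<alpha> \<beta>)"
      unfolding cross_def by (rule integral_bounded_linear[OF bounded_linear_Re iC])
    finally show ?thesis .
  qed
  also have "cross U \<alpha> \<beta> = cross U ((\<alpha>+\<beta>)/2) ((\<alpha>+\<beta>)/2)"
    by (rule cross_eq[OF U a b]) (use m in auto)
  also have "\<dots> = complex_of_real (Nf U ((\<alpha>+\<beta>)/2))" by (rule cross_diag[OF U m(2)])
  also have "Nf U \<alpha> + Nf U \<beta> - 2 * Re (complex_of_real (Nf U ((\<alpha>+\<beta>)/2))) \<le> Nf U \<alpha> - Nf U \<beta>"
    using Nf_mono'[OF U m(2) m(3)] by simp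
  finally show ?thesis .
qed



definition kfun :: "real \<Rightarrow> real \<Rightarrow> real \<Rightarrow> real" where
  "kfun \<kappa> d \<xi> = (if \<xi> = 1/\<kappa> \<or> \<xi> = -1/\<kappa> then 4 else min 4 (Gsq \<kappa> \<xi> * d\<^sup>2))"

lemma Gsq_nonneg: "\<kappa> > 0 \<Longrightarrow> Gsq \<kappa> \<xi> \<ge> 0"
  unfolding Gsq_def by (intro divide_nonneg_pos mult_nonneg_nonneg) auto

lemma kfun_nonneg: "\<kappa> > 0 \<Longrightarrow> kfun \<kappa> d \<xi> \<ge> 0"
  unfolding kfun_def using Gsq_nonneg[of \<kappa> \<xi>] by auto

lemma kfun_le4: "kfun \<kappa> d \<xi> \<le> 4"
  unfolding kfun_def by auto

lemma kfun_mono: "\<kappa> > 0 \<Longrightarrow> 0 \<le> d \<Longrightarrow> d \<le> d' \<Longrightarrow> kfun \<kappa> d \<xi> \<le> kfun \<kappa> d' \<xi>"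
proof -
  assume k: "\<kappa> > 0" and d: "0 \<le> d" "d \<le> d'"
  have "Gsq \<kappa> \<xi> * d\<^sup>2 \<le> Gsq \<kappa> \<xi> * d'\<^sup>2" using Gsq_nonneg[OF k, of \<xi>] d by (intro mult_left_mono power_mono) auto
  then show ?thesis unfolding kfun_def by (auto simp: min_def)
qed

lemma kfun_meas: "kfun \<kappa> d \<in> borel_measurable lborel"
  unfolding kfun_def[abs_def] Gsq_def by measurable

lemma kfun_int:
  assumes U: "U \<in> H2 a" and \<kappa>: "\<kappa> > 0" and \<alpha>: "\<alpha> > a"
  shows "integrable lborel (\<lambda>\<xi>. kfun \<kappa> d \<xi> * (cmod (U (Complex \<alpha> \<xi>)))\<^sup>2)"
proof (rule Bochner_Integration.integrable_bound)
  show "integrable lborel (\<lambda>\<xi>. 4 * (cmod (U (Complex \<alpha> \<xi>)))\<^sup>2)"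
    using line_L2[OF U \<alpha>] by simp
  show "(\<lambda>\<xi>. kfun \<kappa> d \<xi> * (cmod (U (Complex \<alpha> \<xi>)))\<^sup>2) \<in> borel_measurable lborel"
    using kfun_meas line_meas2[OF U \<alpha>] by measurable
  show "AE \<xi> in lborel. norm (kfun \<kappa> d \<xi> * (cmod (U (Complex \<alpha> \<xi>)))\<^sup>2) \<le> norm (4 * (cmod (U (Complex \<alpha> \<xi>)))\<^sup>2)"
    using kfun_nonneg[OF \<kappa>] kfun_le4 by (intro AE_I2) (simp add: abs_mult mult_right_mono)
qed

lemma single_line:
  assumes U: "U \<in> H2 a" and \<kappa>: "\<kappa> > 0" and \<alpha>: "\<alpha> > a" and e: "e > 0"
  shows "\<exists>d>0. (LINT \<xi>|lborel. kfun \<kappa> d \<xi> * (cmod (U (Complex \<alpha> \<xi>)))\<^sup>2) < e"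
proof -
  define s where "s i \<xi> = kfun \<kappa> (1 / (real i + 1)) \<xi> * (cmod (U (Complex \<alpha> \<xi>)))\<^sup>2" for i :: nat and \<xi>
  have "(\<lambda>i. LINT \<xi>|lborel. s i \<xi>) \<longlonglongrightarrow> (LINT (\<xi>::real)|lborel. (0::real))"
  proof (rule integral_dominated_convergence[of "\<lambda>\<xi>. 0" lborel s "\<lambda>\<xi>. 4 * (cmod (U (Complex \<alpha> \<xi>)))\<^sup>2"])
    show "(\<lambda>\<xi>. 0::real) \<in> borel_measurable lborel" by simp
    show "s i \<in> borel_measurable lborel" for i
      unfolding s_def using kfun_meas line_meas2[OF U \<alpha>] by measurable
    show "integrable lborel (\<lambda>\<xi>. 4 * (cmod (U (Complex \<alpha> \<xi>)))\<^sup>2)"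
      using line_L2[OF U \<alpha>] by simp
    show "AE \<xi> in lborel. norm (s i \<xi>) \<le> 4 * (cmod (U (Complex \<alpha> \<xi>)))\<^sup>2" for i
      using kfun_nonneg[OF \<kappa>] kfun_le4 unfolding s_def by (intro AE_I2) (simp add: abs_mult mult_right_mono)
    have "AE \<xi> in lborel. \<xi> \<noteq> 1/\<kappa>" "AE \<xi> in lborel. \<xi> \<noteq> -1/\<kappa>" by (rule AE_lborel_singleton)+
    then show "AE \<xi> in lborel. (\<lambda>i. s i \<xi>) \<longlonglongrightarrow> 0"
    proof eventually_elim
      fix \<xi> :: real assume n: "\<xi> \<noteq> 1/\<kappa>" "\<xi> \<noteq> -1/\<kappa>"
      have z: "(\<lambda>i. 1 / (real i + 1)) \<longlonglongrightarrow> (0::real)" by real_asymp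
      have "(\<lambda>i. Gsq \<kappa> \<xi> * (1 / (real i + 1))\<^sup>2) \<longlonglongrightarrow> Gsq \<kappa> \<xi> * 0\<^sup>2"
        by (intro tendsto_mult tendsto_const tendsto_power z)
      then have "(\<lambda>i. min 4 (Gsq \<kappa> \<xi> * (1 / (real i + 1))\<^sup>2)) \<longlonglongrightarrow> min 4 (Gsq \<kappa> \<xi> * 0\<^sup>2)"
        by (intro tendsto_min tendsto_const)
      then have "(\<lambda>i. min 4 (Gsq \<kappa> \<xi> * (1 / (real i + 1))\<^sup>2) * (cmod (U (Complex \<alpha> \<xi>)))\<^sup>2) \<longlonglongrightarrow> min 4 (Gsq \<kappa> \<xi> * 0\<^sup>2) * (cmod (U (Complex \<alpha> \<xi>)))\<^sup>2"
        by (rule tendsto_mult_right)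
      then show "(\<lambda>i. s i \<xi>) \<longlonglongrightarrow> 0" using n by (simp add: s_def kfun_def)
    qed
  qed
  then have "(\<lambda>i. LINT \<xi>|lborel. s i \<xi>) \<longlonglongrightarrow> 0" by simp
  from LIMSEQ_D[OF this e] obtain i where "norm ((LINT \<xi>|lborel. s i \<xi>) - 0) < e" by blast
  then have "(LINT \<xi>|lborel. s i \<xi>) < e" by simp
  then show ?thesis unfolding s_def by (intro exI[of _ "1 / (real i + 1)"]) simp
qed



lemma sq_tri: "(cmod A)\<^sup>2 \<le> 2 * (cmod (A - B))\<^sup>2 + 2 * (cmod B)\<^sup>2"
proof -
  have t: "cmod A \<le> cmod (A - B) + cmod B" using norm_triangle_ineq[of "A - B" B] by simp
  have "(cmod A)\<^sup>2 \<le> (cmod (A - B) + cmod B)\<^sup>2" using t by (simp add: power_mono)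
  also have "\<dots> \<le> 2 * (cmod (A - B))\<^sup>2 + 2 * (cmod B)\<^sup>2"
    using sum_squares_bound[of "cmod (A - B)" "cmod B"] by (simp add: power2_sum)
  finally show ?thesis .
qed

lemma diff_int:
  assumes U: "U \<in> H2 a" and a: "\<alpha> > a" "\<beta> > a"
  shows "integrable lborel (\<lambda>\<xi>. (cmod (U (Complex \<alpha> \<xi>) - U (Complex \<beta> \<xi>)))\<^sup>2)"
proof (rule Bochner_Integration.integrable_bound)
  show "integrable lborel (\<lambda>\<xi>. 2 * (cmod (U (Complex \<alpha> \<xi>)))\<^sup>2 + 2 * (cmod (- U (Complex \<beta> \<xi>)))\<^sup>2)"
    using line_L2[OF U a(1)] line_L2[OF U a(2)] by simp
  show "(\<lambda>\<xi>. (cmod (U (Complex \<alpha> \<xi>) - U (Complex \<beta> \<xi>)))\<^sup>2) \<in> borel_measurable lborel"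
    using line_meas2[OF U a(1)] line_meas2[OF U a(2)] by measurable
  show "AE \<xi> in lborel. norm ((cmod (U (Complex \<alpha> \<xi>) - U (Complex \<beta> \<xi>)))\<^sup>2) \<le> norm (2 * (cmod (U (Complex \<alpha> \<xi>)))\<^sup>2 + 2 * (cmod (- U (Complex \<beta> \<xi>)))\<^sup>2)"
  proof (rule AE_I2)
    fix \<xi>
    have "(cmod (U (Complex \<alpha> \<xi>) - U (Complex \<beta> \<xi>)))\<^sup>2 \<le> 2 * (cmod (U (Complex \<alpha> \<xi>) - U (Complex \<beta> \<xi>) - U (Complex \<alpha> \<xi>)))\<^sup>2 + 2 * (cmod (U (Complex \<alpha> \<xi>)))\<^sup>2"
      by (rule sq_tri)
    then show "norm ((cmod (U (Complex \<alpha> \<xi>) - U (Complex \<beta> \<xi>)))\<^sup>2) \<le> norm (2 * (cmod (U (Complex \<alpha> \<xi>)))\<^sup>2 + 2 * (cmod (- U (Complex \<beta> \<xi>)))\<^sup>2)"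
      by simp
  qed
qed

lemma diff_small:
  assumes U: "U \<in> H2 a" and a: "\<alpha> > a" "\<beta> > a"
  shows "(LINT \<xi>|lborel. (cmod (U (Complex \<alpha> \<xi>) - U (Complex \<beta> \<xi>)))\<^sup>2) \<le> \<bar>Nf U \<alpha> - Nf U \<beta>\<bar>"
proof (cases "\<alpha> \<le> \<beta>")
  case True then show ?thesis using diff_L2[OF U a(1) True] by linarith
next
  case False
  then have "\<beta> \<le> \<alpha>" by simp
  from diff_L2[OF U a(2) this] show ?thesis by (simp add: norm_minus_commute)
qed

lemma UI:
  assumes U: "U \<in> H2 a" and \<kappa>: "\<kappa> > 0" and e: "\<epsilon> > 0"
  shows "\<exists>d>0. \<forall>\<alpha>>a. (LINT \<xi>|lborel. kfun \<kappa> d \<xi> * (cmod (U (Complex \<alpha> \<xi>)))\<^sup>2) \<le> \<epsilon>"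
proof -
  define \<eta> where "\<eta> = \<epsilon> / 10"
  have \<eta>: "\<eta> > 0" using e by (simp add: \<eta>_def)
  define M where "M = enn2real (hardy_sq a U)"
  define K where "K = nat \<lceil>M / \<eta>\<rceil>"
  define A where "A k = {\<alpha>. a < \<alpha> \<and> real k * \<eta> \<le> Nf U \<alpha> \<and> Nf U \<alpha> < (real k + 1) * \<eta>}" for k :: nat
  define Ks where "Ks = {k. k \<le> K \<and> A k \<noteq> {}}"
  have finKs: "finite Ks" unfolding Ks_def by simp
  define \<beta> where "\<beta> k = (SOME \<alpha>. \<alpha> \<in> A k)" for k
  have \<beta>A: "\<beta> k \<in> A k" if "k \<in> Ks" for k
    using that unfolding Ks_def \<beta>_def by (auto intro: someI)
  have "\<forall>k\<in>Ks. \<exists>d>0. (LINT \<xi>|lborel. kfun \<kappa> d \<xi> * (cmod (U (Complex (\<beta> k) \<xi>)))\<^sup>2) < \<eta>"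
  proof
    fix k assume "k \<in> Ks"
    then have "\<beta> k > a" using \<beta>A[of k] by (simp add: A_def)
    then show "\<exists>d>0. (LINT \<xi>|lborel. kfun \<kappa> d \<xi> * (cmod (U (Complex (\<beta> k) \<xi>)))\<^sup>2) < \<eta>"
      by (rule single_line[OF U \<kappa> _ \<eta>])
  qed
  then obtain dd where dd: "\<And>k. k \<in> Ks \<Longrightarrow> dd k > 0 \<and> (LINT \<xi>|lborel. kfun \<kappa> (dd k) \<xi> * (cmod (U (Complex (\<beta> k) \<xi>)))\<^sup>2) < \<eta>"
    by metis
  define d where "d = Min (insert 1 (dd ` Ks))"
  have dpos: "d > 0" unfolding d_def using finKs dd by (auto simp: Min_gr_iff)
  have dle: "d \<le> dd k" if "k \<in> Ks" for k unfolding d_def using finKs that by (intro Min_le) auto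
  have "\<forall>\<alpha>>a. (LINT \<xi>|lborel. kfun \<kappa> d \<xi> * (cmod (U (Complex \<alpha> \<xi>)))\<^sup>2) \<le> \<epsilon>"
  proof (intro allI impI)
    fix \<alpha> assume \<alpha>: "\<alpha> > a"
    define k where "k = nat \<lfloor>Nf U \<alpha> / \<eta>\<rfloor>"
    have N0: "Nf U \<alpha> \<ge> 0" by (rule Nf_nonneg)
    have fl0: "\<lfloor>Nf U \<alpha> / \<eta>\<rfloor> \<ge> 0" using N0 \<eta> by simp
    have rk: "real k = of_int \<lfloor>Nf U \<alpha> / \<eta>\<rfloor>" using fl0 by (simp add: k_def)
    have k1: "real k * \<eta> \<le> Nf U \<alpha>"
      using of_int_floor_le[of "Nf U \<alpha> / \<eta>"] \<eta> unfolding rk by (simp add: le_divide_eq)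
    have k2: "Nf U \<alpha> < (real k + 1) * \<eta>"
    proof -
      have "Nf U \<alpha> / \<eta> < of_int \<lfloor>Nf U \<alpha> / \<eta>\<rfloor> + 1" using floor_le_iff[of "Nf U \<alpha> / \<eta>" "\<lfloor>Nf U \<alpha> / \<eta>\<rfloor>"] by simp
      then have "Nf U \<alpha> < (of_int \<lfloor>Nf U \<alpha> / \<eta>\<rfloor> + 1) * \<eta>" using pos_divide_less_eq[OF \<eta>] by blast
      then show ?thesis unfolding rk .
    qed
    have "Nf U \<alpha> \<le> M" unfolding M_def by (rule Nf_le[OF U \<alpha>])
    then have "Nf U \<alpha> / \<eta> \<le> M / \<eta>" using \<eta> by (simp add: divide_right_mono)
    then have "\<lfloor>Nf U \<alpha> / \<eta>\<rfloor> \<le> \<lceil>M / \<eta>\<rceil>" by (meson floor_le_ceiling floor_mono order_trans)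
    then have kK: "k \<le> K" unfolding k_def K_def by (simp add: nat_mono)
    have \<alpha>A: "\<alpha> \<in> A k" using \<alpha> k1 k2 by (simp add: A_def)
    then have kKs: "k \<in> Ks" using kK by (auto simp: Ks_def)
    let ?b = "\<beta> k"
    have bA: "?b \<in> A k" by (rule \<beta>A[OF kKs])
    then have b: "?b > a" and bN: "real k * \<eta> \<le> Nf U ?b" "Nf U ?b < (real k + 1) * \<eta>" by (auto simp: A_def)
    have close: "\<bar>Nf U \<alpha> - Nf U ?b\<bar> < \<eta>" using k1 k2 bN by (simp add: algebra_simps abs_less_iff)
    have i1: "integrable lborel (\<lambda>\<xi>. kfun \<kappa> d \<xi> * (cmod (U (Complex \<alpha> \<xi>)))\<^sup>2)" by (rule kfun_int[OF U \<kappa> \<alpha>])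
    have iD: "integrable lborel (\<lambda>\<xi>. (cmod (U (Complex \<alpha> \<xi>) - U (Complex ?b \<xi>)))\<^sup>2)" by (rule diff_int[OF U \<alpha> b])
    have iB: "integrable lborel (\<lambda>\<xi>. kfun \<kappa> d \<xi> * (cmod (U (Complex ?b \<xi>)))\<^sup>2)" by (rule kfun_int[OF U \<kappa> b])
    have iB': "integrable lborel (\<lambda>\<xi>. kfun \<kappa> (dd k) \<xi> * (cmod (U (Complex ?b \<xi>)))\<^sup>2)" by (rule kfun_int[OF U \<kappa> b])
    have "(LINT \<xi>|lborel. kfun \<kappa> d \<xi> * (cmod (U (Complex \<alpha> \<xi>)))\<^sup>2)
        \<le> (LINT \<xi>|lborel. 8 * (cmod (U (Complex \<alpha> \<xi>) - U (Complex ?b \<xi>)))\<^sup>2 + 2 * (kfun \<kappa> d \<xi> * (cmod (U (Complex ?b \<xi>)))\<^sup>2))"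
    proof (rule integral_mono[OF i1])
      show "integrable lborel (\<lambda>\<xi>. 8 * (cmod (U (Complex \<alpha> \<xi>) - U (Complex ?b \<xi>)))\<^sup>2 + 2 * (kfun \<kappa> d \<xi> * (cmod (U (Complex ?b \<xi>)))\<^sup>2))"
        using iD iB by simp
      fix \<xi>
      let ?A = "U (Complex \<alpha> \<xi>)" and ?B = "U (Complex ?b \<xi>)" and ?k = "kfun \<kappa> d \<xi>"
      have k0: "?k \<ge> 0" by (rule kfun_nonneg[OF \<kappa>])
      have k4: "?k \<le> 4" by (rule kfun_le4)
      have "?k * (cmod ?A)\<^sup>2 \<le> ?k * (2 * (cmod (?A - ?B))\<^sup>2 + 2 * (cmod ?B)\<^sup>2)"
        using k0 sq_tri[of ?A ?B] by (rule mult_left_mono[rotated])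
      also have "\<dots> = 2 * ?k * (cmod (?A - ?B))\<^sup>2 + 2 * (?k * (cmod ?B)\<^sup>2)" by (simp add: algebra_simps)
      also have "2 * ?k * (cmod (?A - ?B))\<^sup>2 \<le> 8 * (cmod (?A - ?B))\<^sup>2" using k4 by (simp add: mult_right_mono)
      finally show "?k * (cmod ?A)\<^sup>2 \<le> 8 * (cmod (?A - ?B))\<^sup>2 + 2 * (?k * (cmod ?B)\<^sup>2)" by simp
    qed
    also have "\<dots> = 8 * (LINT \<xi>|lborel. (cmod (U (Complex \<alpha> \<xi>) - U (Complex ?b \<xi>)))\<^sup>2) + 2 * (LINT \<xi>|lborel. kfun \<kappa> d \<xi> * (cmod (U (Complex ?b \<xi>)))\<^sup>2)"
      using iD iB by simp
    also have "\<dots> \<le> 8 * \<eta> + 2 * \<eta>"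
    proof (intro add_mono mult_left_mono)
      show "(LINT \<xi>|lborel. (cmod (U (Complex \<alpha> \<xi>) - U (Complex ?b \<xi>)))\<^sup>2) \<le> \<eta>"
        using diff_small[OF U \<alpha> b] close by linarith
      have "(LINT \<xi>|lborel. kfun \<kappa> d \<xi> * (cmod (U (Complex ?b \<xi>)))\<^sup>2) \<le> (LINT \<xi>|lborel. kfun \<kappa> (dd k) \<xi> * (cmod (U (Complex ?b \<xi>)))\<^sup>2)"
        using dpos dle[OF kKs] \<kappa> by (intro integral_mono[OF iB iB'] mult_right_mono kfun_mono) auto
      then show "(LINT \<xi>|lborel. kfun \<kappa> d \<xi> * (cmod (U (Complex ?b \<xi>)))\<^sup>2) \<le> \<eta>"
        using dd[OF kKs] by linarith
    qed auto
    also have "\<dots> = \<epsilon>" by (simp add: \<eta>_def)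
    finally show "(LINT \<xi>|lborel. kfun \<kappa> d \<xi> * (cmod (U (Complex \<alpha> \<xi>)))\<^sup>2) \<le> \<epsilon>" .
  qed
  then show ?thesis using dpos by blast
qed



lemma exp_le1:
  assumes "Re w \<ge> 0" "t \<ge> 0"
  shows "cmod (exp (- w * complex_of_real t)) \<le> 1"
  using assms by (simp add: mult_nonneg_nonneg)

lemma m_holo:
  assumes "\<kappa> > 0" "a \<ge> 0"
  shows "(\<lambda>p. exp (- wfun \<kappa> p * complex_of_real t)) holomorphic_on half_plane a"
  using wfun_holo[OF assms] by (intro holomorphic_intros)

lemma Re_w_hp:
  assumes "\<kappa> > 0" "a \<ge> 0" "p \<in> half_plane a"
  shows "Re (wfun \<kappa> p) > 0"
  using assms by (intro Re_wfun_pos) (auto simp: half_plane_def)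

lemma clause2_bound:
  assumes U: "U \<in> H2 a" and \<kappa>: "\<kappa> > 0" and a: "a \<ge> 0" and t: "t \<ge> 0" "t0 \<ge> 0"
    and d: "d > 0" "\<bar>t - t0\<bar> < d"
    and bnd: "\<forall>\<alpha>>a. (LINT \<xi>|lborel. kfun \<kappa> d \<xi> * (cmod (U (Complex \<alpha> \<xi>)))\<^sup>2) \<le> \<epsilon>"
  shows "hardy_sq a (\<lambda>p. semigrp \<kappa> t U p - semigrp \<kappa> t0 U p) \<le> ennreal \<epsilon>"
  unfolding hardy_sq_def
proof (rule SUP_least)
  fix \<alpha> assume "\<alpha> \<in> {a<..}"
  then have \<alpha>: "\<alpha> > a" by simp
  have "(\<integral>\<^sup>+ \<xi>. ennreal ((cmod (semigrp \<kappa> t U (Complex \<alpha> \<xi>) - semigrp \<kappa> t0 U (Complex \<alpha> \<xi>)))\<^sup>2) \<partial>lborel)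
      \<le> (\<integral>\<^sup>+ \<xi>. ennreal (kfun \<kappa> d \<xi> * (cmod (U (Complex \<alpha> \<xi>)))\<^sup>2) \<partial>lborel)"
  proof (rule nn_integral_mono)
    fix \<xi>
    define p where "p = Complex \<alpha> \<xi>"
    define w where "w = wfun \<kappa> p"
    have php: "p \<in> half_plane a" using \<alpha> by (simp add: p_def half_plane_def)
    have rw: "Re w \<ge> 0" using Re_w_hp[OF \<kappa> a php] by (simp add: w_def)
    define D where "D = exp (- w * of_real t) - exp (- w * of_real t0)"
    have eq: "semigrp \<kappa> t U p - semigrp \<kappa> t0 U p = D * U p"
      by (simp add: semigrp_eq D_def w_def algebra_simps)
    have D2: "cmod D \<le> 2" unfolding D_def by (rule exp_diff_bound2[OF rw t(2) t(1)])
    have D4: "(cmod D)\<^sup>2 \<le> 4" using D2 by (metis norm_ge_zero power_mono numeral_One numeral_times_numeral power2_eq_square semiring_norm(12) semiring_norm(13) mult_2 numeral_Bit0 one_add_one)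
    have Dk: "(cmod D)\<^sup>2 \<le> kfun \<kappa> d \<xi>"
    proof (cases "\<xi> = 1/\<kappa> \<or> \<xi> = -1/\<kappa>")
      case True then show ?thesis using D4 by (simp add: kfun_def)
    next
      case False
      have "cmod D \<le> cmod w * \<bar>t - t0\<bar>" unfolding D_def by (rule exp_diff_bound[OF rw t(2) t(1)])
      then have "(cmod D)\<^sup>2 \<le> (cmod w * \<bar>t - t0\<bar>)\<^sup>2" by (simp add: power_mono)
      also have "\<dots> = (cmod w)\<^sup>2 * \<bar>t - t0\<bar>\<^sup>2" by (simp add: power_mult_distrib)
      also have "\<dots> \<le> Gsq \<kappa> \<xi> * d\<^sup>2"
      proof (rule mult_mono)
        show "(cmod w)\<^sup>2 \<le> Gsq \<kappa> \<xi>" unfolding w_def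
          using wfun_Gsq[OF \<kappa>, of p] False \<alpha> a by (simp add: p_def)
        show "\<bar>t - t0\<bar>\<^sup>2 \<le> d\<^sup>2" using d by (intro power_mono) auto
      qed (use Gsq_nonneg[OF \<kappa>] in auto)
      finally show ?thesis using D4 False by (simp add: kfun_def)
    qed
    have "(cmod (semigrp \<kappa> t U p - semigrp \<kappa> t0 U p))\<^sup>2 = (cmod D)\<^sup>2 * (cmod (U p))\<^sup>2"
      by (simp add: eq norm_mult power_mult_distrib)
    also have "\<dots> \<le> kfun \<kappa> d \<xi> * (cmod (U p))\<^sup>2" using Dk by (simp add: mult_right_mono)
    finally show "ennreal ((cmod (semigrp \<kappa> t U (Complex \<alpha> \<xi>) - semigrp \<kappa> t0 U (Complex \<alpha> \<xi>)))\<^sup>2)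
        \<le> ennreal (kfun \<kappa> d \<xi> * (cmod (U (Complex \<alpha> \<xi>)))\<^sup>2)"
      by (simp add: p_def ennreal_leI)
  qed
  also have "\<dots> = ennreal (LINT \<xi>|lborel. kfun \<kappa> d \<xi> * (cmod (U (Complex \<alpha> \<xi>)))\<^sup>2)"
    by (rule nn_integral_eq_integral[OF kfun_int[OF U \<kappa> \<alpha>]]) (simp add: kfun_nonneg[OF \<kappa>])
  also have "\<dots> \<le> ennreal \<epsilon>" using bnd \<alpha> by (simp add: ennreal_leI)
  finally show "(\<integral>\<^sup>+ \<xi>. ennreal ((cmod (semigrp \<kappa> t U (Complex \<alpha> \<xi>) - semigrp \<kappa> t0 U (Complex \<alpha> \<xi>)))\<^sup>2) \<partial>lborel) \<le> ennreal \<epsilon>" .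
qed

lemma clause2:
  assumes U: "U \<in> H2 a" and \<kappa>: "\<kappa> > 0" and a: "a \<ge> 0" and t0: "t0 \<ge> 0"
  shows "((\<lambda>t. H2_norm a (\<lambda>p. semigrp \<kappa> t U p - semigrp \<kappa> t0 U p)) \<longlongrightarrow> 0) (at t0 within {0..})"
proof (rule tendstoI)
  fix e :: real assume e: "e > 0"
  define \<epsilon> where "\<epsilon> = (e/2)\<^sup>2"
  have \<epsilon>: "\<epsilon> > 0" using e by (simp add: \<epsilon>_def)
  obtain d where d: "d > 0" and bnd: "\<forall>\<alpha>>a. (LINT \<xi>|lborel. kfun \<kappa> d \<xi> * (cmod (U (Complex \<alpha> \<xi>)))\<^sup>2) \<le> \<epsilon>"
    using UI[OF U \<kappa> \<epsilon>] by blast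
  show "\<forall>\<^sub>F t in at t0 within {0..}. dist (H2_norm a (\<lambda>p. semigrp \<kappa> t U p - semigrp \<kappa> t0 U p)) 0 < e"
    unfolding eventually_at
  proof (intro exI[of _ d] conjI ballI impI)
    show "d > 0" by (rule d)
    fix t :: real assume "t \<in> {0..}" and td: "t \<noteq> t0 \<and> dist t t0 < d"
    then have t: "t \<ge> 0" by simp
    have "hardy_sq a (\<lambda>p. semigrp \<kappa> t U p - semigrp \<kappa> t0 U p) \<le> ennreal \<epsilon>"
      by (rule clause2_bound[OF U \<kappa> a t t0 d]) (use td bnd in \<open>auto simp: dist_real_def\<close>)
    then have "enn2real (hardy_sq a (\<lambda>p. semigrp \<kappa> t U p - semigrp \<kappa> t0 U p)) \<le> \<epsilon>"
    proof -
      assume h: "hardy_sq a (\<lambda>p. semigrp \<kappa> t U p - semigrp \<kappa> t0 U p) \<le> ennreal \<epsilon>"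
      have "enn2real (hardy_sq a (\<lambda>p. semigrp \<kappa> t U p - semigrp \<kappa> t0 U p)) \<le> enn2real (ennreal \<epsilon>)"
        by (rule enn2real_mono[OF h]) simp
      then show ?thesis using \<epsilon> by simp
    qed
    then have "H2_norm a (\<lambda>p. semigrp \<kappa> t U p - semigrp \<kappa> t0 U p) \<le> sqrt \<epsilon>"
      unfolding H2_norm_def by (rule real_sqrt_le_mono)
    also have "sqrt \<epsilon> = e / 2" using e by (simp add: \<epsilon>_def)
    finally have "H2_norm a (\<lambda>p. semigrp \<kappa> t U p - semigrp \<kappa> t0 U p) < e" using e by linarith
    moreover have "H2_norm a (\<lambda>p. semigrp \<kappa> t U p - semigrp \<kappa> t0 U p) \<ge> 0" by (simp add: H2_norm_def)
    ultimately show "dist (H2_norm a (\<lambda>p. semigrp \<kappa> t U p - semigrp \<kappa> t0 U p)) 0 < e" by simp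
  qed
qed

theorem lemma5p5:
  fixes \<kappa> a :: real and U :: "complex \<Rightarrow> complex"
  assumes "\<kappa> > 0" and "a \<ge> 0" and "U \<in> H2 a"
  shows "(\<forall>t\<ge>0. semigrp \<kappa> t U \<in> H2 a)
     \<and> (\<forall>t0\<ge>0. ((\<lambda>t. H2_norm a (\<lambda>p. semigrp \<kappa> t U p - semigrp \<kappa> t0 U p))
                      \<longlongrightarrow> 0) (at t0 within {0..}))
     \<and> (\<forall>t\<ge>0. H2_norm a (semigrp \<kappa> t U) \<le> H2_norm a U)
     \<and> (a > 0 \<longrightarrow> (\<exists>c>0. \<forall>V\<in>H2 a. \<forall>t\<ge>0.
            H2_norm a (semigrp \<kappa> t V) \<le> exp (- c * t) * H2_norm a V))"
proof (intro conjI allI impI)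
  have mb1: "cmod (exp (- wfun \<kappa> p * complex_of_real t)) \<le> 1" if "t \<ge> 0" "p \<in> half_plane a" for t p
    using Re_w_hp[OF assms(1,2) that(2)] that(1) by (intro exp_le1) auto
  fix t :: real assume t: "t \<ge> 0"
  show "semigrp \<kappa> t U \<in> H2 a"
    unfolding semigrp_eq by (rule mult_H2(1)[OF assms(3) m_holo[OF assms(1,2)] mb1[OF t] zero_le_one])
next
  fix t0 :: real assume "t0 \<ge> 0"
  then show "((\<lambda>t. H2_norm a (\<lambda>p. semigrp \<kappa> t U p - semigrp \<kappa> t0 U p)) \<longlongrightarrow> 0) (at t0 within {0..})"
    by (rule clause2[OF assms(3,1,2)])
next
  have mb1: "cmod (exp (- wfun \<kappa> p * complex_of_real t)) \<le> 1" if "t \<ge> 0" "p \<in> half_plane a" for t p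
    using Re_w_hp[OF assms(1,2) that(2)] that(1) by (intro exp_le1) auto
  fix t :: real assume t: "t \<ge> 0"
  show "H2_norm a (semigrp \<kappa> t U) \<le> H2_norm a U"
    unfolding semigrp_eq using mult_H2(2)[OF assms(3) m_holo[OF assms(1,2)] mb1[OF t]] by simp
next
  assume apos: "a > 0"
  obtain c where c: "c > 0" "\<And>p. Re p > a \<Longrightarrow> Re (wfun \<kappa> p) \<ge> c"
    using Re_wfun_lower[OF assms(1) apos] by blast
  have "\<forall>V\<in>H2 a. \<forall>t\<ge>0. H2_norm a (semigrp \<kappa> t V) \<le> exp (- c * t) * H2_norm a V"
  proof (intro ballI allI impI)
    fix V t assume V: "V \<in> H2 a" and t: "(t::real) \<ge> 0"
    have mb: "cmod (exp (- wfun \<kappa> p * complex_of_real t)) \<le> exp (- c * t)" if "p \<in> half_plane a" for p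
    proof -
      have "Re (wfun \<kappa> p) \<ge> c" using c(2) that by (simp add: half_plane_def)
      then have "Re (wfun \<kappa> p) * t \<ge> c * t" using t by (simp add: mult_right_mono)
      then show ?thesis by simp
    qed
    show "H2_norm a (semigrp \<kappa> t V) \<le> exp (- c * t) * H2_norm a V"
      unfolding semigrp_eq by (rule mult_H2(2)[OF V m_holo[OF assms(1,2)] mb]) simp_all
  qed
  then show "\<exists>c>0. \<forall>V\<in>H2 a. \<forall>t\<ge>0. H2_norm a (semigrp \<kappa> t V) \<le> exp (- c * t) * H2_norm a V"
    using c(1) by blast
qed

end
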